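(* The elements $A^iB^jC^k\alpha^r\beta^s\gamma^t$ with $i,j,k,r,s,t\geq 0$ form a basis for the $\mathbb F$-vector space $\Delta$.
   Context: Let $\mathbb F$ be a field and fix a nonzero $q\in\mathbb F$ with $q^4\neq 1$. The universal Askey--Wilson algebra $\Delta$ is the associative $\mathbb F$-algebra with 1 with generators $A,B,C$ subject to the relations that each of $A+\frac{qBC-q^{-1}CB}{q^2-q^{-2}}$, $B+\frac{qCA-q^{-1}AC}{q^2-q^{-2}}$, $C+\frac{qAB-q^{-1}BA}{q^2-q^{-2}}$ is central; $\alpha,\beta,\gamma$ denote these three central elements (in order) each multiplied by $q+q^{-1}$. *)

theory Defs
  imports Main "HOL-Library.Function_Algebras"
begin

text \<open>Free associative algebra over a field on three generators A, B, C:
  finitely supported functions from words to coefficients, with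
  concatenation (convolution) product.\<close>

datatype gen = GA | GB | GC

type_synonym 'k fa = "gen list \<Rightarrow> 'k"

definition fa_fin :: "('k::zero) fa set" where
  "fa_fin = {f. finite {w. f w \<noteq> 0}}"

definition fa_word :: "gen list \<Rightarrow> ('k::{zero,one}) fa" where
  "fa_word w = (\<lambda>u. if u = w then 1 else 0)"

definition fa_smult :: "'k::times \<Rightarrow> 'k fa \<Rightarrow> 'k fa" where
  "fa_smult c f = (\<lambda>w. c * f w)"

definition fa_mult :: "('k::comm_semiring_1) fa \<Rightarrow> 'k fa \<Rightarrow> 'k fa" where
  "fa_mult f g = (\<lambda>w. \<Sum>i\<le>length w. f (take i w) * g (drop i w))"

fun fa_pow :: "('k::comm_semiring_1) fa \<Rightarrow> nat \<Rightarrow> 'k fa" where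
  "fa_pow f 0 = fa_word []"
| "fa_pow f (Suc n) = fa_mult f (fa_pow f n)"

definition fa_span :: "('k::comm_semiring_1) fa set \<Rightarrow> 'k fa set" where
  "fa_span S = {f. \<exists>T c. finite T \<and> T \<subseteq> S \<and> f = (\<Sum>t\<in>T. fa_smult (c t) t)}"

definition fa_ideal :: "('k::comm_semiring_1) fa set \<Rightarrow> 'k fa set" where
  "fa_ideal S = fa_span {fa_mult (fa_mult (fa_word u) s) (fa_word v) | u s v. s \<in> S}"

definition aw_A :: "('k::{zero,one}) fa" where "aw_A = fa_word [GA]"
definition aw_B :: "('k::{zero,one}) fa" where "aw_B = fa_word [GB]"
definition aw_C :: "('k::{zero,one}) fa" where "aw_C = fa_word [GC]"

definition aw_cent :: "'k::field \<Rightarrow> 'k fa \<Rightarrow> 'k fa \<Rightarrow> 'k fa \<Rightarrow> 'k fa" where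
  "aw_cent q X Y Z = X + fa_smult (inverse (q^2 - (inverse q)^2))
      (fa_smult q (fa_mult Y Z) - fa_smult (inverse q) (fa_mult Z Y))"

definition aw_gA :: "'k::field \<Rightarrow> 'k fa" where "aw_gA q = aw_cent q aw_A aw_B aw_C"
definition aw_gB :: "'k::field \<Rightarrow> 'k fa" where "aw_gB q = aw_cent q aw_B aw_C aw_A"
definition aw_gC :: "'k::field \<Rightarrow> 'k fa" where "aw_gC q = aw_cent q aw_C aw_A aw_B"

definition aw_alpha :: "'k::field \<Rightarrow> 'k fa" where "aw_alpha q = fa_smult (q + inverse q) (aw_gA q)"
definition aw_beta :: "'k::field \<Rightarrow> 'k fa" where "aw_beta q = fa_smult (q + inverse q) (aw_gB q)"
definition aw_gamma :: "'k::field \<Rightarrow> 'k fa" where "aw_gamma q = fa_smult (q + inverse q) (aw_gC q)"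

definition aw_rels :: "'k::field \<Rightarrow> 'k fa set" where
  "aw_rels q = {fa_mult X g - fa_mult g X | X g.
      X \<in> {aw_A, aw_B, aw_C} \<and> g \<in> {aw_gA q, aw_gB q, aw_gC q}}"

definition aw_ideal :: "'k::field \<Rightarrow> 'k fa set" where
  "aw_ideal q = fa_ideal (aw_rels q)"

fun aw_mon :: "'k::field \<Rightarrow> nat \<times> nat \<times> nat \<times> nat \<times> nat \<times> nat \<Rightarrow> 'k fa" where
  "aw_mon q (i, j, k, r, s, t) =
     fa_mult (fa_pow aw_A i) (fa_mult (fa_pow aw_B j) (fa_mult (fa_pow aw_C k)
       (fa_mult (fa_pow (aw_alpha q) r) (fa_mult (fa_pow (aw_beta q) s) (fa_pow (aw_gamma q) t)))))"

definition quotient_basis :: "('k::field) fa set \<Rightarrow> ('i \<Rightarrow> 'k fa) \<Rightarrow> bool" where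
  "quotient_basis I b \<longleftrightarrow>
     (\<forall>f\<in>fa_fin. \<exists>M c. finite M \<and> f - (\<Sum>m\<in>M. fa_smult (c m) (b m)) \<in> I) \<and>
     (\<forall>M c. finite M \<and> (\<Sum>m\<in>M. fa_smult (c m) (b m)) \<in> I \<longrightarrow> (\<forall>m\<in>M. c m = 0))"

end

theory Submission
  imports Defs
begin


definition supp :: "('i \<Rightarrow> 'k::zero) \<Rightarrow> 'i set" where "supp v = {m. v m \<noteq> 0}"
definition vfin :: "('i \<Rightarrow> 'k::zero) \<Rightarrow> bool" where "vfin v \<longleftrightarrow> finite (supp v)"
definition smult :: "'k::times \<Rightarrow> ('i \<Rightarrow> 'k) \<Rightarrow> ('i \<Rightarrow> 'k)" where "smult c v = (\<lambda>n. c * v n)"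
definition ev :: "'i \<Rightarrow> 'i \<Rightarrow> 'k::{zero,one}" where "ev m = (\<lambda>n. if n = m then 1 else 0)"
definition lin :: "('i \<Rightarrow> 'j \<Rightarrow> 'k::comm_semiring_1) \<Rightarrow> ('i \<Rightarrow> 'k) \<Rightarrow> 'j \<Rightarrow> 'k" where
  "lin f v = (\<lambda>n. \<Sum>m\<in>supp v. v m * f m n)"

lemma smult_apply[simp]: "smult c v n = c * v n" by (simp add: smult_def)
lemma ev_apply: "ev m n = (if n = m then 1 else 0)" by (simp add: ev_def)
lemma supp_iff[simp]: "m \<in> supp v \<longleftrightarrow> v m \<noteq> 0" by (simp add: supp_def)

lemma sum_fun_apply: "(\<Sum>t\<in>T. g t) n = (\<Sum>t\<in>T. g t n)"
  by (induction T rule: infinite_finite_induct) auto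

lemma fa_smult_eq: "fa_smult = smult" by (auto simp: fa_smult_def smult_def fun_eq_iff)
lemma fa_word_eq: "fa_word = ev" by (auto simp: fa_word_def ev_def fun_eq_iff)
lemma fa_fin_eq: "fa_fin = {v. vfin v}" by (auto simp: fa_fin_def vfin_def supp_def)

lemma vfin_0[simp]: "vfin 0" by (simp add: vfin_def supp_def)
lemma vfin_0'[simp]: "vfin (\<lambda>_. 0)" by (simp add: vfin_def supp_def)
lemma vfin_ev[simp]: "vfin (ev m :: 'i \<Rightarrow> 'k::zero_neq_one)"
proof -
  have "supp (ev m :: 'i \<Rightarrow> 'k) \<subseteq> {m}" by (auto simp: supp_def ev_def)
  thus ?thesis unfolding vfin_def using finite_subset by blast
qed
lemma vfin_add[simp]: "vfin u \<Longrightarrow> vfin v \<Longrightarrow> vfin (u + (v :: 'i \<Rightarrow> 'k::monoid_add))"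
proof -
  assume a: "vfin u" "vfin v"
  have "supp (u+v) \<subseteq> supp u \<union> supp v" by (auto simp: supp_def)
  thus ?thesis using a unfolding vfin_def using finite_subset by blast
qed
lemma vfin_uminus[simp]: "vfin (- (v :: 'i \<Rightarrow> 'k::group_add)) = vfin v"
  by (simp add: vfin_def supp_def)
lemma vfin_diff[simp]: "vfin u \<Longrightarrow> vfin v \<Longrightarrow> vfin (u - (v :: 'i \<Rightarrow> 'k::group_add))"
proof -
  assume a: "vfin u" "vfin v"
  have "supp (u-v) \<subseteq> supp u \<union> supp v" by (auto simp: supp_def)
  thus ?thesis using a unfolding vfin_def using finite_subset by blast
qed
lemma vfin_smult[simp]: "vfin v \<Longrightarrow> vfin (smult c (v :: 'i \<Rightarrow> 'k::mult_zero))"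
proof -
  assume a: "vfin v"
  have "supp (smult c v) \<subseteq> supp v" by (auto simp: supp_def)
  thus ?thesis using a unfolding vfin_def using finite_subset by blast
qed
lemma vfin_sum[simp]: "(\<And>t. t \<in> T \<Longrightarrow> vfin (g t)) \<Longrightarrow> vfin (\<Sum>t\<in>T. (g t :: 'i \<Rightarrow> 'k::comm_monoid_add))"
  by (induction T rule: infinite_finite_induct) auto

lemma lin_eq: "finite S \<Longrightarrow> supp v \<subseteq> S \<Longrightarrow> lin f v = (\<lambda>n. \<Sum>m\<in>S. v m * f m n)"
  unfolding lin_def by (auto intro!: sum.mono_neutral_left simp: supp_def)

lemma lin_add: "vfin u \<Longrightarrow> vfin v \<Longrightarrow> lin f (u + v) = lin f u + lin f v"
proof -
  assume a: "vfin u" "vfin v"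
  let ?S = "supp u \<union> supp v"
  have f: "finite ?S" using a by (simp add: vfin_def)
  have "supp (u+v) \<subseteq> ?S" by (auto simp: supp_def)
  thus ?thesis using f
    by (simp add: lin_eq[OF f] fun_eq_iff distrib_right sum.distrib)
qed

lemma lin_smult: "lin f (smult c v) = smult c (lin f (v::'i \<Rightarrow> 'k::field))"
proof (cases "c = 0")
  case True thus ?thesis by (simp add: lin_def smult_def supp_def)
next
  case False
  hence "supp (smult c v) = supp v" by (auto simp: supp_def)
  thus ?thesis by (simp add: lin_def fun_eq_iff sum_distrib_left mult.assoc)
qed

lemma lin_uminus: "lin f (- v) = - lin f (v::'i \<Rightarrow> 'k::field)"
proof -
  have e: "- v = smult (-1) v" by (simp add: fun_eq_iff)
  have "lin f (- v) = smult (-1) (lin f v)" unfolding e by (rule lin_smult)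
  also have "\<dots> = - lin f v" by (simp add: fun_eq_iff)
  finally show ?thesis .
qed

lemma lin_diff: "vfin u \<Longrightarrow> vfin v \<Longrightarrow> lin f (u - v) = lin f u - lin f (v::'i \<Rightarrow> 'k::field)"
proof -
  assume a: "vfin u" "vfin v"
  have "lin f (u - v) = lin f (u + - v)" by (simp only: diff_conv_add_uminus)
  also have "\<dots> = lin f u + - lin f v" using a by (simp only: lin_add vfin_uminus lin_uminus)
  also have "\<dots> = lin f u - lin f v" by (simp only: diff_conv_add_uminus)
  finally show ?thesis .
qed

lemma lin_zero[simp]: "lin f 0 = 0" by (simp add: lin_def supp_def fun_eq_iff)

lemma lin_ev[simp]: "lin f (ev m) = (f m :: 'j \<Rightarrow> 'k::comm_semiring_1)"
proof -
  have "lin f (ev m) = (\<lambda>n. \<Sum>p\<in>{m}. ev m p * f p n)"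
    by (rule lin_eq) (auto simp: supp_def ev_def)
  thus ?thesis by (simp add: ev_def)
qed

lemma lin_sum: "(\<And>t. t \<in> T \<Longrightarrow> vfin (g t)) \<Longrightarrow>
   lin f (\<Sum>t\<in>T. g t) = (\<Sum>t\<in>T. lin f (g t :: 'i \<Rightarrow> 'k::field))"
proof (induction T rule: infinite_finite_induct)
  case (insert x F)
  have "vfin (\<Sum>t\<in>F. g t)" by (rule vfin_sum) (use insert in auto)
  hence "lin f (g x + (\<Sum>t\<in>F. g t)) = lin f (g x) + lin f (\<Sum>t\<in>F. g t)"
    using insert by (intro lin_add) auto
  also have "lin f (\<Sum>t\<in>F. g t) = (\<Sum>t\<in>F. lin f (g t))" using insert by auto
  finally show ?case by (simp only: sum.insert[OF insert(1,2)])
qed auto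

lemma supp_lin: "supp (lin f v) \<subseteq> (\<Union>m\<in>supp v. supp (f m))"
proof
  fix n assume "n \<in> supp (lin f v)"
  hence "(\<Sum>m\<in>supp v. v m * f m n) \<noteq> 0" by (simp add: lin_def)
  then obtain m where "m \<in> supp v" "v m * f m n \<noteq> 0"
    by (meson sum.not_neutral_contains_not_neutral)
  thus "n \<in> (\<Union>m\<in>supp v. supp (f m))" by (auto simp: supp_def)
qed

lemma vfin_lin[simp]: "vfin v \<Longrightarrow> (\<And>m. m \<in> supp v \<Longrightarrow> vfin (f m)) \<Longrightarrow> vfin (lin f v)"
  unfolding vfin_def using supp_lin[of f v] by (meson finite_UN_I finite_subset)

lemma lin_cong: "(\<And>m. m \<in> supp v \<Longrightarrow> f m = g m) \<Longrightarrow> lin f v = lin g v"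
  by (simp add: lin_def)

lemma lin_fadd: "lin (\<lambda>m. f m + g m) v = lin f v + lin g v"
  by (simp add: lin_def fun_eq_iff distrib_left sum.distrib)
lemma lin_fsmult: "lin (\<lambda>m. smult c (f m)) v = smult c (lin f (v::'i \<Rightarrow> 'k::field))"
  by (simp add: lin_def fun_eq_iff sum_distrib_left mult.left_commute)
lemma lin_fdiff: "lin (\<lambda>m. f m - g m) v = lin f v - lin g (v::'i \<Rightarrow> 'k::field)"
  by (simp add: lin_def fun_eq_iff right_diff_distrib sum_subtractf)
lemma lin_fzero: "lin (\<lambda>m. 0) v = 0"
  by (simp add: lin_def fun_eq_iff)

lemma lin_comp: "vfin v \<Longrightarrow> (\<And>m. m \<in> supp v \<Longrightarrow> vfin (g m)) \<Longrightarrow>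
   lin f (lin g v) = lin (\<lambda>m. lin f (g m)) (v::'i \<Rightarrow> 'k::field)"
proof -
  assume a: "vfin v" "\<And>m. m \<in> supp v \<Longrightarrow> vfin (g m)"
  have "lin g v = (\<Sum>m\<in>supp v. smult (v m) (g m))"
    by (simp add: lin_def fun_eq_iff sum_fun_apply)
  hence "lin f (lin g v) = lin f (\<Sum>m\<in>supp v. smult (v m) (g m))" by simp
  also have "\<dots> = (\<Sum>m\<in>supp v. lin f (smult (v m) (g m)))"
    by (rule lin_sum) (use a in auto)
  also have "\<dots> = (\<Sum>m\<in>supp v. smult (v m) (lin f (g m)))" by (simp add: lin_smult)
  also have "\<dots> = lin (\<lambda>m. lin f (g m)) v"
    by (simp add: lin_def fun_eq_iff sum_fun_apply)
  finally show ?thesis .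
qed

lemma lin_ev_id: "vfin v \<Longrightarrow> lin ev v = (v :: 'i \<Rightarrow> 'k::comm_semiring_1)"
proof (rule ext)
  fix n assume a: "vfin v"
  have "lin ev v n = (\<Sum>m\<in>supp v \<union> {n}. v m * ev m n)"
    using a by (subst lin_eq[of "supp v \<union> {n}"]) (auto simp: vfin_def)
  also have "\<dots> = (\<Sum>m\<in>{n}. v m * ev m n)"
    using a by (intro sum.mono_neutral_right) (auto simp: vfin_def ev_def)
  finally show "lin ev v n = v n" by (simp add: ev_def)
qed


type_synonym idx = "nat \<times> nat \<times> nat \<times> nat \<times> nat \<times> nat"

definition eps :: "'k::field \<Rightarrow> 'k" where "eps q = q^2 - (inverse q)^2"
definition kinv :: "'k::field \<Rightarrow> 'k" where "kinv q = inverse (q + inverse q)"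

fun afun :: "idx \<Rightarrow> idx \<Rightarrow> 'k::field" where "afun (i,j,k,r,s,t) = ev (Suc i,j,k,r,s,t)"
fun trI :: "nat \<times> nat \<times> nat \<Rightarrow> idx \<Rightarrow> idx" where
  "trI (x,y,z) (i,j,k,r,s,t) = (i,j,k,r+x,s+y,t+z)"
fun deg :: "idx \<Rightarrow> nat" where "deg (i,j,k,r,s,t) = i+j+k"

fun stepB :: "'k::field \<Rightarrow> (idx \<Rightarrow> idx \<Rightarrow> 'k) \<Rightarrow> (idx \<Rightarrow> idx \<Rightarrow> 'k) \<Rightarrow> idx \<Rightarrow> idx \<Rightarrow> 'k" where
  "stepB q bn cn (0,j,k,r,s,t) = ev (0,Suc j,k,r,s,t)"
| "stepB q bn cn (Suc i,j,k,r,s,t) = smult (q^2) (lin afun (bn (i,j,k,r,s,t)))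
     + smult (q * eps q) (cn (i,j,k,r,s,t)) - smult (q * eps q * kinv q) (ev (i,j,k,r,s,Suc t))"

fun stepC :: "'k::field \<Rightarrow> (idx \<Rightarrow> idx \<Rightarrow> 'k) \<Rightarrow> (idx \<Rightarrow> idx \<Rightarrow> 'k) \<Rightarrow> idx \<Rightarrow> idx \<Rightarrow> 'k" where
  "stepC q bn cn (0,0,k,r,s,t) = ev (0,0,Suc k,r,s,t)"
| "stepC q bn cn (0,Suc j,k,r,s,t) = smult (q^2) (lin bn (cn (0,j,k,r,s,t)))
     + smult (q * eps q) (ev (1,j,k,r,s,t)) - smult (q * eps q * kinv q) (ev (0,j,k,Suc r,s,t))"
| "stepC q bn cn (Suc i,j,k,r,s,t) = smult (inverse q ^ 2) (lin afun (cn (i,j,k,r,s,t)))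
     - smult (inverse q * eps q) (bn (i,j,k,r,s,t)) + smult (inverse q * eps q * kinv q) (ev (i,j,k,r,Suc s,t))"

primrec itp :: "'k::field \<Rightarrow> nat \<Rightarrow> (idx \<Rightarrow> idx \<Rightarrow> 'k) \<times> (idx \<Rightarrow> idx \<Rightarrow> 'k)" where
  "itp q 0 = (\<lambda>_. 0, \<lambda>_. 0)"
| "itp q (Suc n) = (stepB q (fst (itp q n)) (snd (itp q n)), stepC q (fst (itp q n)) (snd (itp q n)))"

abbreviation "Bn q n \<equiv> fst (itp q n)"
abbreviation "Cn q n \<equiv> snd (itp q n)"

lemma Bn_Suc: "Bn q (Suc n) = stepB q (Bn q n) (Cn q n)" by simp
lemma Cn_Suc: "Cn q (Suc n) = stepC q (Bn q n) (Cn q n)" by simp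

lemma vfin_afun[simp]: "vfin (afun m)" by (cases m) auto

lemma vfin_it: "vfin (Bn q n m) \<and> vfin (Cn q n m)"
proof (induction n arbitrary: m)
  case 0 thus ?case by simp
next
  case (Suc n)
  obtain i j k r s t where m: "m = (i,j,k,r,s,t)" by (cases m) auto
  have "vfin (Bn q (Suc n) m)"
    unfolding m Bn_Suc using Suc by (cases i) auto
  moreover have "vfin (Cn q (Suc n) m)"
    unfolding m Cn_Suc using Suc by (cases i; cases j) auto
  ultimately show ?case by simp
qed

definition dbound :: "(idx \<Rightarrow> 'k::zero) \<Rightarrow> nat \<Rightarrow> bool" where
  "dbound v d \<longleftrightarrow> (\<forall>p\<in>supp v. deg p \<le> d)"

lemma dbound_I: "(\<And>p. v p \<noteq> 0 \<Longrightarrow> deg p \<le> d) \<Longrightarrow> dbound v d"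
  unfolding dbound_def by simp
lemma dbound_D: "dbound v d \<Longrightarrow> v p \<noteq> 0 \<Longrightarrow> deg p \<le> d"
  unfolding dbound_def by simp
lemma dbound_ev[simp]: "dbound (ev m :: idx \<Rightarrow> 'k::zero_neq_one) d \<longleftrightarrow> deg m \<le> d"
proof
  assume "dbound (ev m :: idx \<Rightarrow> 'k) d" thus "deg m \<le> d" by (rule dbound_D) (simp add: ev_def)
next
  assume "deg m \<le> d" thus "dbound (ev m :: idx \<Rightarrow> 'k) d"
    by (intro dbound_I) (metis ev_def)
qed
lemma dbound_add[simp]: "dbound u d \<Longrightarrow> dbound v d \<Longrightarrow> dbound (u + (v::idx \<Rightarrow> 'k::monoid_add)) d"
  by (intro dbound_I) (metis add.left_neutral dbound_D plus_fun_apply)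
lemma dbound_diff[simp]: "dbound u d \<Longrightarrow> dbound v d \<Longrightarrow> dbound (u - (v::idx \<Rightarrow> 'k::group_add)) d"
  by (intro dbound_I) (metis diff_self dbound_D minus_apply)
lemma dbound_smult[simp]: "dbound v d \<Longrightarrow> dbound (smult c (v::idx \<Rightarrow> 'k::mult_zero)) d"
  by (intro dbound_I) (metis dbound_D mult_zero_right smult_apply)
lemma dbound_mono: "dbound v d \<Longrightarrow> d \<le> e \<Longrightarrow> dbound v e"
  by (auto simp: dbound_def)
lemma dbound_lin: "(\<And>m. m \<in> supp v \<Longrightarrow> dbound (f m) d) \<Longrightarrow> dbound (lin f v) d"
  using supp_lin[of f v] unfolding dbound_def by blast
lemma dbound_lin_afun: "dbound v d \<Longrightarrow> dbound (lin afun v :: idx \<Rightarrow> 'k::field) (Suc d)"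
proof (rule dbound_lin)
  fix m assume "dbound v d" "m \<in> supp v"
  hence "deg m \<le> d" by (simp add: dbound_def)
  moreover obtain i j k r s t where "m = (i,j,k,r,s,t)" by (cases m) auto
  ultimately show "dbound (afun m :: idx \<Rightarrow> 'k) (Suc d)" by simp
qed

lemma stab:
  "(\<forall>m. 2 * deg m + 1 \<le> n \<longrightarrow> Bn q (Suc n) m = Bn q n m \<and> dbound (Bn q n m) (Suc (deg m))) \<and>
   (\<forall>m. 2 * deg m + 2 \<le> n \<longrightarrow> Cn q (Suc n) m = Cn q n m \<and> dbound (Cn q n m) (Suc (deg m)))"
proof (induction n)
  case 0 thus ?case by simp
next
  case (Suc n)
  have IHB: "\<And>m. 2*deg m+1 \<le> n \<Longrightarrow> Bn q (Suc n) m = Bn q n m \<and> dbound (Bn q n m) (Suc (deg m))"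
    using Suc by blast
  have IHC: "\<And>m. 2*deg m+2 \<le> n \<Longrightarrow> Cn q (Suc n) m = Cn q n m \<and> dbound (Cn q n m) (Suc (deg m))"
    using Suc by blast
  have B: "Bn q (Suc (Suc n)) m = Bn q (Suc n) m \<and> dbound (Bn q (Suc n) m) (Suc (deg m))"
    if "2 * deg m + 1 \<le> Suc n" for m
  proof -
    obtain i j k r s t where m: "m = (i,j,k,r,s,t)" by (cases m) auto
    show ?thesis
    proof (cases i)
      case 0 thus ?thesis unfolding m Bn_Suc by simp
    next
      case (Suc i')
      let ?m = "(i',j,k,r,s,t)"
      have d: "deg m = Suc (deg ?m)" using Suc m by simp
      have h1: "Bn q (Suc n) ?m = Bn q n ?m" "dbound (Bn q n ?m) (Suc (deg ?m))"
        using IHB[of ?m] IHC[of ?m] that d by auto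
      have h2: "Cn q (Suc n) ?m = Cn q n ?m" "dbound (Cn q n ?m) (Suc (deg ?m))"
        using IHB[of ?m] IHC[of ?m] that d by auto
      show ?thesis unfolding m Suc Bn_Suc
        using h1 h2 d m Suc
        by (auto intro!: dbound_lin_afun dbound_add dbound_diff dbound_smult
                 intro: dbound_mono)
    qed
  qed
  have C: "Cn q (Suc (Suc n)) m = Cn q (Suc n) m \<and> dbound (Cn q (Suc n) m) (Suc (deg m))"
    if "2 * deg m + 2 \<le> Suc n" for m
  proof -
    obtain i j k r s t where m: "m = (i,j,k,r,s,t)" by (cases m) auto
    show ?thesis
    proof (cases i)
      case 0
      show ?thesis
      proof (cases j)
        case 0 thus ?thesis unfolding m \<open>i = 0\<close> Cn_Suc by simp
      next
        case (Suc j')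
        let ?m = "(0,j',k,r,s,t)"
        have d: "deg m = Suc (deg ?m)" using Suc m \<open>i = 0\<close> by simp
        have h2: "Cn q (Suc n) ?m = Cn q n ?m" "dbound (Cn q n ?m) (Suc (deg ?m))"
          using IHB[of ?m] IHC[of ?m] that d by auto
        have h3: "lin (Bn q (Suc n)) (Cn q n ?m) = lin (Bn q n) (Cn q n ?m)"
        proof (rule lin_cong)
          fix p assume "p \<in> supp (Cn q n ?m)"
          hence "deg p \<le> Suc (deg ?m)" using h2 by (auto simp: dbound_def)
          hence "2*deg p+1 \<le> n" using that d by simp
          thus "Bn q (Suc n) p = Bn q n p" using IHB by blast
        qed
        have h4: "dbound (lin (Bn q n) (Cn q n ?m)) (Suc (deg m))"
        proof (rule dbound_lin)
          fix p assume "p \<in> supp (Cn q n ?m)"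
          hence "deg p \<le> Suc (deg ?m)" using h2 by (auto simp: dbound_def)
          moreover have "2*deg p+1 \<le> n" using calculation that d by simp
          hence "dbound (Bn q n p) (Suc (deg p))" using IHB by blast
          thus "dbound (Bn q n p) (Suc (deg m))" using calculation d
            by (auto intro: dbound_mono)
        qed
        show ?thesis unfolding m \<open>i = 0\<close> Suc Cn_Suc
          using h2 h3 h4 d m
          by (auto intro!: dbound_add dbound_diff dbound_smult)
      qed
    next
      case (Suc i')
      let ?m = "(i',j,k,r,s,t)"
      have d: "deg m = Suc (deg ?m)" using Suc m by simp
      have h1: "Bn q (Suc n) ?m = Bn q n ?m" "dbound (Bn q n ?m) (Suc (deg ?m))"
        using IHB[of ?m] IHC[of ?m] that d by auto
      have h2: "Cn q (Suc n) ?m = Cn q n ?m" "dbound (Cn q n ?m) (Suc (deg ?m))"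
        using IHB[of ?m] IHC[of ?m] that d by auto
      show ?thesis unfolding m Suc Cn_Suc
        using h1 h2 d m Suc
        by (auto intro!: dbound_lin_afun dbound_add dbound_diff dbound_smult
                 intro: dbound_mono)
    qed
  qed
  show ?case using B C by blast
qed

declare itp.simps(2)[simp del]

definition Bf :: "'k::field \<Rightarrow> idx \<Rightarrow> idx \<Rightarrow> 'k" where "Bf q m = Bn q (2 * deg m + 1) m"
definition Cf :: "'k::field \<Rightarrow> idx \<Rightarrow> idx \<Rightarrow> 'k" where "Cf q m = Cn q (2 * deg m + 2) m"

lemma stableB: "2 * deg m + 1 \<le> n \<Longrightarrow> Bn q n m = Bf q m"
proof (induction n rule: dec_induct)
  case base thus ?case by (simp add: Bf_def)
next
  case (step p)
  have "Bn q (Suc p) m = Bn q p m" using stab[of p q] step(1) by blast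
  thus ?case using step(3) by simp
qed

lemma stableC: "2 * deg m + 2 \<le> n \<Longrightarrow> Cn q n m = Cf q m"
proof (induction n rule: dec_induct)
  case base thus ?case by (simp add: Cf_def)
next
  case (step p)
  have "Cn q (Suc p) m = Cn q p m" using stab[of p q] step(1) by blast
  thus ?case using step(3) by simp
qed

lemma dbB: "dbound (Bf q m) (Suc (deg m))"
proof -
  have "dbound (Bn q (2 * deg m + 1) m) (Suc (deg m))" using stab[of "2 * deg m + 1" q] by blast
  thus ?thesis by (simp add: Bf_def)
qed
lemma dbC: "dbound (Cf q m) (Suc (deg m))"
proof -
  have "dbound (Cn q (2 * deg m + 2) m) (Suc (deg m))" using stab[of "2 * deg m + 2" q] by blast
  thus ?thesis by (simp add: Cf_def)
qed

lemma vfin_Bf[simp]: "vfin (Bf q m)" unfolding Bf_def using vfin_it by blast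
lemma vfin_Cf[simp]: "vfin (Cf q m)" unfolding Cf_def using vfin_it by blast

lemma EqB0: "Bf q (0,j,k,r,s,t) = ev (0,Suc j,k,r,s,t)"
proof -
  have e: "2 * deg (0::nat,j,k,r,s,t) + 1 = Suc (2 * (j+k))" by simp
  show ?thesis unfolding Bf_def e Bn_Suc by simp
qed

lemma EqB: "Bf q (Suc i,j,k,r,s,t) = smult (q^2) (lin afun (Bf q (i,j,k,r,s,t)))
     + smult (q * eps q) (Cf q (i,j,k,r,s,t)) - smult (q * eps q * kinv q) (ev (i,j,k,r,s,Suc t))"
proof -
  let ?m = "(i,j,k,r,s,t)"
  let ?N = "2 * deg ?m + 2"
  have e: "2 * deg (Suc i,j,k,r,s,t) + 1 = Suc ?N" by simp
  have "Bf q (Suc i,j,k,r,s,t) = Bn q (Suc ?N) (Suc i,j,k,r,s,t)" unfolding Bf_def e ..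
  also have "\<dots> = stepB q (Bn q ?N) (Cn q ?N) (Suc i,j,k,r,s,t)" by (simp only: Bn_Suc)
  also have "\<dots> = smult (q^2) (lin afun (Bn q ?N ?m))
     + smult (q * eps q) (Cn q ?N ?m) - smult (q * eps q * kinv q) (ev (i,j,k,r,s,Suc t))"
    by (simp only: stepB.simps)
  also have "Bn q ?N ?m = Bf q ?m" by (rule stableB) simp
  also have "Cn q ?N ?m = Cf q ?m" by (rule stableC) simp
  finally show ?thesis .
qed

lemma EqC0: "Cf q (0,0,k,r,s,t) = ev (0,0,Suc k,r,s,t)"
proof -
  have e: "2 * deg (0::nat,0::nat,k,r,s,t) + 2 = Suc (2 * k + 1)" by simp
  show ?thesis unfolding Cf_def e Cn_Suc by simp
qed

lemma EqC1: "Cf q (0,Suc j,k,r,s,t) = smult (q^2) (lin (Bf q) (Cf q (0,j,k,r,s,t)))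
     + smult (q * eps q) (ev (1,j,k,r,s,t)) - smult (q * eps q * kinv q) (ev (0,j,k,Suc r,s,t))"
proof -
  let ?m = "(0::nat,j,k,r,s,t)"
  let ?N = "2 * deg ?m + 3"
  have e: "2 * deg (0::nat,Suc j,k,r,s,t) + 2 = Suc ?N" by simp
  have "Cf q (0,Suc j,k,r,s,t) = Cn q (Suc ?N) (0,Suc j,k,r,s,t)" unfolding Cf_def e ..
  also have "\<dots> = stepC q (Bn q ?N) (Cn q ?N) (0,Suc j,k,r,s,t)" by (simp only: Cn_Suc)
  also have "\<dots> = smult (q^2) (lin (Bn q ?N) (Cn q ?N ?m))
     + smult (q * eps q) (ev (1,j,k,r,s,t)) - smult (q * eps q * kinv q) (ev (0,j,k,Suc r,s,t))"
    by (simp only: stepC.simps)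
  also have "Cn q ?N ?m = Cf q ?m" by (rule stableC) simp
  also have "lin (Bn q ?N) (Cf q ?m) = lin (Bf q) (Cf q ?m)"
  proof (rule lin_cong)
    fix p assume "p \<in> supp (Cf q ?m)"
    hence "deg p \<le> Suc (deg ?m)" using dbC[of q ?m] by (simp add: dbound_def)
    thus "Bn q ?N p = Bf q p" by (intro stableB) simp
  qed
  finally show ?thesis .
qed

lemma EqC: "Cf q (Suc i,j,k,r,s,t) = smult (inverse q ^ 2) (lin afun (Cf q (i,j,k,r,s,t)))
     - smult (inverse q * eps q) (Bf q (i,j,k,r,s,t)) + smult (inverse q * eps q * kinv q) (ev (i,j,k,r,Suc s,t))"
proof -
  let ?m = "(i,j,k,r,s,t)"
  let ?N = "2 * deg ?m + 3"
  have e: "2 * deg (Suc i,j,k,r,s,t) + 2 = Suc ?N" by simp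
  have "Cf q (Suc i,j,k,r,s,t) = Cn q (Suc ?N) (Suc i,j,k,r,s,t)" unfolding Cf_def e ..
  also have "\<dots> = stepC q (Bn q ?N) (Cn q ?N) (Suc i,j,k,r,s,t)" by (simp only: Cn_Suc)
  also have "\<dots> = smult (inverse q ^ 2) (lin afun (Cn q ?N ?m))
     - smult (inverse q * eps q) (Bn q ?N ?m) + smult (inverse q * eps q * kinv q) (ev (i,j,k,r,Suc s,t))"
    by (simp only: stepC.simps)
  also have "Bn q ?N ?m = Bf q ?m" by (rule stableB) simp
  also have "Cn q ?N ?m = Cf q ?m" by (rule stableC) simp
  finally show ?thesis .
qed

section \<open>Translation invariance\<close>

definition trV :: "nat \<times> nat \<times> nat \<Rightarrow> (idx \<Rightarrow> 'k::field) \<Rightarrow> idx \<Rightarrow> 'k" where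
  "trV d v = lin (\<lambda>p. ev (trI d p)) v"

lemma trV_ev[simp]: "trV d (ev p) = ev (trI d p)" by (simp add: trV_def)
lemma vfin_trV[simp]: "vfin v \<Longrightarrow> vfin (trV d v)" by (simp add: trV_def)
lemma trV_add: "vfin u \<Longrightarrow> vfin v \<Longrightarrow> trV d (u + v) = trV d u + trV d v" by (simp add: trV_def lin_add)
lemma trV_diff: "vfin u \<Longrightarrow> vfin v \<Longrightarrow> trV d (u - v) = trV d u - trV d v" by (simp add: trV_def lin_diff)
lemma trV_smult: "trV d (smult c v) = smult c (trV d v)" by (simp add: trV_def lin_smult)
lemma lin_trV: "vfin v \<Longrightarrow> lin f (trV d v) = lin (\<lambda>p. f (trI d p)) v"
  unfolding trV_def by (subst lin_comp) auto
lemma trV_lin: "vfin v \<Longrightarrow> (\<And>p. vfin (f p)) \<Longrightarrow> trV d (lin f v) = lin (\<lambda>p. trV d (f p)) v"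
  unfolding trV_def by (subst lin_comp) auto
lemma afun_trI: "afun (trI d p) = (trV d (afun p) :: idx \<Rightarrow> 'k::field)"
  by (cases d; cases p) simp

lemma it_tr: "Bn q n (trI d m) = trV d (Bn q n m) \<and> Cn q n (trI d m) = trV d (Cn q n m)"
proof (induction n arbitrary: m)
  case 0 thus ?case by (simp add: trV_def lin_def supp_def)
next
  case (Suc n)
  obtain x y z where d: "d = (x,y,z)" by (cases d) auto
  obtain i j k r s t where m: "m = (i,j,k,r,s,t)" by (cases m) auto
  have fB: "\<And>p. vfin (Bn q n p)" using vfin_it by blast
  have fC: "\<And>p. vfin (Cn q n p)" using vfin_it by blast
  have la: "\<And>v. vfin v \<Longrightarrow> trV d (lin afun v) = lin afun (trV d v)"
    by (simp add: trV_lin lin_trV afun_trI)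
  have B: "Bn q (Suc n) (trI d m) = trV d (Bn q (Suc n) m)"
  proof (cases i)
    case 0 thus ?thesis by (simp add: Bn_Suc Cn_Suc m d)
  next
    case (Suc i')
    have "trV d (Bn q (Suc n) m) = smult (q^2) (trV d (lin afun (Bn q n (i',j,k,r,s,t))))
     + smult (q * eps q) (trV d (Cn q n (i',j,k,r,s,t))) - smult (q * eps q * kinv q) (trV d (ev (i',j,k,r,s,Suc t)))"
      by (simp add: Bn_Suc Cn_Suc m Suc fB fC trV_add trV_diff trV_smult)
    also have "\<dots> = Bn q (Suc n) (trI d m)"
      using Suc.IH[of "(i',j,k,r,s,t)"] by (simp add: Bn_Suc Cn_Suc m Suc d la[unfolded d] fB)
    finally show ?thesis by simp
  qed
  have C: "Cn q (Suc n) (trI d m) = trV d (Cn q (Suc n) m)"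
  proof (cases i)
    case 0
    show ?thesis
    proof (cases j)
      case 0 thus ?thesis using \<open>i = 0\<close> by (simp add: Bn_Suc Cn_Suc m d)
    next
      case (Suc j')
      have lb: "trV d (lin (Bn q n) (Cn q n (0,j',k,r,s,t))) = lin (Bn q n) (Cn q n (trI d (0,j',k,r,s,t)))"
        using Suc.IH by (simp add: trV_lin lin_trV fB fC)
      have "trV d (Cn q (Suc n) m) = smult (q^2) (trV d (lin (Bn q n) (Cn q n (0,j',k,r,s,t))))
       + smult (q * eps q) (trV d (ev (1,j',k,r,s,t))) - smult (q * eps q * kinv q) (trV d (ev (0,j',k,Suc r,s,t)))"
        using \<open>i = 0\<close> by (simp add: Bn_Suc Cn_Suc m Suc fB fC trV_add trV_diff trV_smult)
      also have "\<dots> = Cn q (Suc n) (trI d m)"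
        unfolding lb using \<open>i = 0\<close> by (simp add: Bn_Suc Cn_Suc m Suc d)
      finally show ?thesis by simp
    qed
  next
    case (Suc i')
    have "trV d (Cn q (Suc n) m) = smult (inverse q ^ 2) (trV d (lin afun (Cn q n (i',j,k,r,s,t))))
     - smult (inverse q * eps q) (trV d (Bn q n (i',j,k,r,s,t))) + smult (inverse q * eps q * kinv q) (trV d (ev (i',j,k,r,Suc s,t)))"
      by (simp add: Bn_Suc Cn_Suc m Suc fB fC trV_add trV_diff trV_smult)
    also have "\<dots> = Cn q (Suc n) (trI d m)"
      using Suc.IH[of "(i',j,k,r,s,t)"] by (simp add: Bn_Suc Cn_Suc m Suc d la[unfolded d] fC)
    finally show ?thesis by simp
  qed
  show ?case using B C by blast
qed

lemma deg_trI[simp]: "deg (trI d m) = deg m" by (cases d; cases m) simp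

lemma Bf_tr: "Bf q (trI d m) = trV d (Bf q m)"
  by (simp add: Bf_def it_tr)
lemma Cf_tr: "Cf q (trI d m) = trV d (Cf q m)"
  by (simp add: Cf_def it_tr)


definition opA :: "(idx \<Rightarrow> 'k::field) \<Rightarrow> idx \<Rightarrow> 'k" where "opA v = lin afun v"
definition opB :: "'k::field \<Rightarrow> (idx \<Rightarrow> 'k) \<Rightarrow> idx \<Rightarrow> 'k" where "opB q v = lin (Bf q) v"
definition opC :: "'k::field \<Rightarrow> (idx \<Rightarrow> 'k) \<Rightarrow> idx \<Rightarrow> 'k" where "opC q v = lin (Cf q) v"

lemma vfin_opA[simp]: "vfin v \<Longrightarrow> vfin (opA v)" by (simp add: opA_def)
lemma vfin_opB[simp]: "vfin v \<Longrightarrow> vfin (opB q v)" by (simp add: opB_def)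
lemma vfin_opC[simp]: "vfin v \<Longrightarrow> vfin (opC q v)" by (simp add: opC_def)

lemma opA_add: "vfin u \<Longrightarrow> vfin v \<Longrightarrow> opA (u + v) = opA u + opA v" by (simp add: opA_def lin_add)
lemma opB_add: "vfin u \<Longrightarrow> vfin v \<Longrightarrow> opB q (u + v) = opB q u + opB q v" by (simp add: opB_def lin_add)
lemma opC_add: "vfin u \<Longrightarrow> vfin v \<Longrightarrow> opC q (u + v) = opC q u + opC q v" by (simp add: opC_def lin_add)
lemma opA_diff: "vfin u \<Longrightarrow> vfin v \<Longrightarrow> opA (u - v) = opA u - opA v" by (simp add: opA_def lin_diff)
lemma opB_diff: "vfin u \<Longrightarrow> vfin v \<Longrightarrow> opB q (u - v) = opB q u - opB q v" by (simp add: opB_def lin_diff)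
lemma opC_diff: "vfin u \<Longrightarrow> vfin v \<Longrightarrow> opC q (u - v) = opC q u - opC q v" by (simp add: opC_def lin_diff)
lemma opA_smult: "opA (smult c v) = smult c (opA v)" by (simp add: opA_def lin_smult)
lemma opB_smult: "opB q (smult c v) = smult c (opB q v)" by (simp add: opB_def lin_smult)
lemma opC_smult: "opC q (smult c v) = smult c (opC q v)" by (simp add: opC_def lin_smult)
lemmas op_lin = opA_add opB_add opC_add opA_diff opB_diff opC_diff opA_smult opB_smult opC_smult
  trV_add trV_diff trV_smult

lemma opA_tr: "vfin v \<Longrightarrow> opA (trV d v) = trV d (opA v)"
  unfolding opA_def by (simp add: lin_trV trV_lin afun_trI)
lemma opB_tr: "vfin v \<Longrightarrow> opB q (trV d v) = trV d (opB q v)"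
  unfolding opB_def by (simp add: lin_trV trV_lin Bf_tr)
lemma opC_tr: "vfin v \<Longrightarrow> opC q (trV d v) = trV d (opC q v)"
  unfolding opC_def by (simp add: lin_trV trV_lin Cf_tr)

lemma lc3: "smult a (lin f v) + smult b (lin g v) - smult c (lin h v)
   = lin (\<lambda>m. smult a (f m) + smult b (g m) - smult c (h m)) (v::idx \<Rightarrow> 'k::field)"
  by (simp add: lin_fadd lin_fdiff lin_fsmult)
lemma lc3': "smult a (lin f v) - smult b (lin g v) + smult c (lin h v)
   = lin (\<lambda>m. smult a (f m) - smult b (g m) + smult c (h m)) (v::idx \<Rightarrow> 'k::field)"
  by (simp add: lin_fadd lin_fdiff lin_fsmult)

lemma E3: "vfin v \<Longrightarrow> opB q (opA v) = smult (q^2) (opA (opB q v)) + smult (q * eps q) (opC q v)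
    - smult (q * eps q * kinv q) (trV (0,0,1) v)"
proof -
  assume v: "vfin v"
  have l: "opB q (opA v) = lin (\<lambda>m. lin (Bf q) (afun m)) v"
    unfolding opA_def opB_def using v by (simp add: lin_comp)
  have r: "opA (opB q v) = lin (\<lambda>m. lin afun (Bf q m)) v"
    unfolding opA_def opB_def using v by (simp add: lin_comp)
  show ?thesis unfolding l r opC_def trV_def lc3
  proof (rule lin_cong)
    fix m :: idx
    obtain i j k r s t where m: "m = (i,j,k,r,s,t)" by (cases m) auto
    show "lin (Bf q) (afun m) = smult (q^2) (lin afun (Bf q m)) + smult (q * eps q) (Cf q m)
      - smult (q * eps q * kinv q) (ev (trI (0,0,1) m))"
      by (simp add: m EqB fun_eq_iff)
  qed
qed

lemma E2: "vfin v \<Longrightarrow> opC q (opA v) = smult (inverse q ^ 2) (opA (opC q v)) - smult (inverse q * eps q) (opB q v)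
    + smult (inverse q * eps q * kinv q) (trV (0,1,0) v)"
proof -
  assume v: "vfin v"
  have l: "opC q (opA v) = lin (\<lambda>m. lin (Cf q) (afun m)) v"
    unfolding opA_def opC_def using v by (simp add: lin_comp)
  have r: "opA (opC q v) = lin (\<lambda>m. lin afun (Cf q m)) v"
    unfolding opA_def opC_def using v by (simp add: lin_comp)
  show ?thesis unfolding l r opB_def trV_def lc3'
  proof (rule lin_cong)
    fix m :: idx
    obtain i j k r s t where m: "m = (i,j,k,r,s,t)" by (cases m) auto
    show "lin (Cf q) (afun m) = smult (inverse q ^ 2) (lin afun (Cf q m)) - smult (inverse q * eps q) (Bf q m)
      + smult (inverse q * eps q * kinv q) (ev (trI (0,1,0) m))"
      by (simp add: m EqC fun_eq_iff)
  qed
qed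

definition E1 :: "'k::field \<Rightarrow> (idx \<Rightarrow> 'k) \<Rightarrow> bool" where
  "E1 q x \<longleftrightarrow> opC q (opB q x) = smult (q^2) (opB q (opC q x)) + smult (q * eps q) (opA x)
     - smult (q * eps q * kinv q) (trV (1,0,0) x)"

lemma E1_base: "E1 q (ev (0,j,k,r,s,t))"
  unfolding E1_def opA_def opB_def opC_def by (simp add: EqB0 EqC1 fun_eq_iff)

lemma E1_step:
  assumes q: "q \<noteq> 0" and x: "vfin x" and e: "E1 q x"
  shows "E1 q (opA x)"
proof -
  let ?e = "eps q" and ?k = "kinv q"
  let ?a = "(1::nat,0::nat,0::nat)" and ?b = "(0::nat,1::nat,0::nat)" and ?c = "(0::nat,0::nat,1::nat)"
  define X1 where "X1 = opA (opB q (opC q x))"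
  define X2 where "X2 = opA (opA x)"
  define X3 where "X3 = opA (trV ?a x)"
  define X4 where "X4 = opB q (opB q x)"
  define X5 where "X5 = trV ?b (opB q x)"
  define X6 where "X6 = opC q (opC q x)"
  define X7 where "X7 = trV ?c (opC q x)"
  have e1: "opC q (opB q x) = smult (q^2) (opB q (opC q x)) + smult (q * ?e) (opA x) - smult (q * ?e * ?k) (trV ?a x)"
    using e by (simp add: E1_def)
  have L1: "opC q (opB q (opA x)) = smult (q^2) (opC q (opA (opB q x))) + smult (q * ?e) X6 - smult (q * ?e * ?k) X7"
    using x by (simp add: E3 op_lin X6_def X7_def opC_tr)
  have L2: "opC q (opA (opB q x)) = smult (inverse q ^ 2) (opA (opC q (opB q x))) - smult (inverse q * ?e) X4
     + smult (inverse q * ?e * ?k) X5"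
    using x by (simp add: E2 X4_def X5_def)
  have L3: "opA (opC q (opB q x)) = smult (q^2) X1 + smult (q * ?e) X2 - smult (q * ?e * ?k) X3"
    using x unfolding e1 by (simp add: op_lin X1_def X2_def X3_def)
  have R1: "opB q (opC q (opA x)) = smult (inverse q ^ 2) (opB q (opA (opC q x))) - smult (inverse q * ?e) X4
     + smult (inverse q * ?e * ?k) X5"
    using x by (simp add: E2 op_lin X4_def X5_def opB_tr)
  have R2: "opB q (opA (opC q x)) = smult (q^2) X1 + smult (q * ?e) X6 - smult (q * ?e * ?k) X7"
    using x by (simp add: E3 X1_def X6_def X7_def)
  have R3: "trV ?a (opA x) = X3" using x by (simp add: X3_def opA_tr)
  show ?thesis
    unfolding E1_def L1 L2 L3 R1 R2 R3 X2_def[symmetric]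
    using q by (simp add: fun_eq_iff field_simps power2_eq_square)
qed

lemma opA_ev: "opA (ev (i,j,k,r,s,t)) = ev (Suc i,j,k,r,s,t)" by (simp add: opA_def)

lemma E1_ev: "q \<noteq> 0 \<Longrightarrow> E1 q (ev (i,j,k,r,s,t))"
proof (induction i)
  case 0 show ?case by (rule E1_base)
next
  case (Suc i)
  hence "E1 q (opA (ev (i,j,k,r,s,t)))" by (intro E1_step) auto
  thus ?case by (simp add: opA_ev)
qed

lemma E1_all: assumes q: "q \<noteq> 0" and v: "vfin v" shows "E1 q v"
proof -
  have l: "opC q (opB q v) = lin (\<lambda>m. opC q (opB q (ev m))) v"
    unfolding opB_def opC_def using v by (simp add: lin_comp)
  have r: "opB q (opC q v) = lin (\<lambda>m. opB q (opC q (ev m))) v"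
    unfolding opB_def opC_def using v by (simp add: lin_comp)
  have a: "opA v = lin (\<lambda>m. opA (ev m)) v" by (simp add: opA_def)
  have t: "trV (1,0,0) v = lin (\<lambda>m. trV (1,0,0) (ev m)) v" by (simp add: trV_def)
  show ?thesis unfolding E1_def l r a t lc3
  proof (rule lin_cong)
    fix m :: idx
    obtain i j k r s t where m: "m = (i,j,k,r,s,t)" by (cases m) auto
    show "opC q (opB q (ev m)) = smult (q^2) (opB q (opC q (ev m))) + smult (q * eps q) (opA (ev m))
      - smult (q * eps q * kinv q) (trV (1,0,0) (ev m))"
      using E1_ev[OF q, of i j k r s t] by (simp add: m E1_def)
  qed
qed


lemma take_drop_eq_iff:
  "i \<le> length w \<Longrightarrow> (take i w = u \<and> drop i w = v) \<longleftrightarrow> (i = length u \<and> w = u @ v)"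
  by (metis append_take_drop_id append_eq_conv_conj length_take min_absorb2)

lemma fa_mult_ev: "fa_mult (ev u) (ev v) = (ev (u @ v) :: gen list \<Rightarrow> 'k::comm_semiring_1)"
proof (rule ext)
  fix w :: "gen list"
  have "fa_mult (ev u) (ev v) w = (\<Sum>i\<le>length w. (if i = length u \<and> w = u @ v then 1 else 0))"
    unfolding fa_mult_def
    by (intro sum.cong refl) (auto simp: ev_apply take_drop_eq_iff[symmetric])
  also have "\<dots> = ev (u @ v) w"
    by (auto simp: sum.delta' ev_apply)
  finally show "fa_mult (ev u) (ev v) w = ev (u @ v) w" .
qed

lemma fa_mult_lin_left: "fa_mult (lin F v) g = lin (\<lambda>m. fa_mult (F m) g) v"
  unfolding fa_mult_def lin_def
  by (simp add: fun_eq_iff sum_distrib_right sum_distrib_left mult.assoc sum.swap[of _ "{..length _}"])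

lemma fa_mult_lin_right: "fa_mult g (lin F v) = lin (\<lambda>m. fa_mult g (F m)) v"
  unfolding fa_mult_def lin_def
  by (simp add: fun_eq_iff sum_distrib_right sum_distrib_left mult.left_commute sum.swap[of _ "{..length _}"])

lemma fa_mult_add_left: "fa_mult (f + g) h = fa_mult f h + fa_mult g h"
  by (simp add: fa_mult_def fun_eq_iff distrib_right sum.distrib)
lemma fa_mult_add_right: "fa_mult h (f + g) = fa_mult h f + fa_mult h g"
  by (simp add: fa_mult_def fun_eq_iff distrib_left sum.distrib)
lemma fa_mult_diff_left: "fa_mult (f - g) h = fa_mult f h - fa_mult g (h :: gen list \<Rightarrow> 'k::comm_ring_1)"
  by (simp add: fa_mult_def fun_eq_iff left_diff_distrib sum_subtractf)
lemma fa_mult_diff_right: "fa_mult h (f - g) = fa_mult h f - fa_mult h (g :: gen list \<Rightarrow> 'k::comm_ring_1)"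
  by (simp add: fa_mult_def fun_eq_iff right_diff_distrib sum_subtractf)
lemma fa_mult_smult_left: "fa_mult (smult c f) h = smult c (fa_mult f h)"
  by (simp add: fa_mult_def fun_eq_iff sum_distrib_left mult.assoc)
lemma fa_mult_smult_right: "fa_mult h (smult c f) = smult c (fa_mult h f)"
  by (simp add: fa_mult_def fun_eq_iff sum_distrib_left mult.left_commute)
lemma fa_mult_zero_left[simp]: "fa_mult 0 h = 0"
  by (simp add: fa_mult_def fun_eq_iff)
lemma fa_mult_zero_right[simp]: "fa_mult h 0 = 0"
  by (simp add: fa_mult_def fun_eq_iff)
lemma fa_mult_sum_left: "fa_mult (\<Sum>t\<in>T. f t) h = (\<Sum>t\<in>T. fa_mult (f t) h)"
  unfolding fa_mult_def
  by (simp add: fun_eq_iff sum_fun_apply sum_distrib_right sum.swap[of _ "{..length _}"])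
lemma fa_mult_sum_right: "fa_mult h (\<Sum>t\<in>T. f t) = (\<Sum>t\<in>T. fa_mult h (f t))"
  unfolding fa_mult_def
  by (simp add: fun_eq_iff sum_fun_apply sum_distrib_left sum.swap[of _ "{..length _}"])

lemma fa_mult_ev_left: "vfin h \<Longrightarrow> fa_mult (ev u) h = lin (\<lambda>y. ev (u @ y)) (h :: gen list \<Rightarrow> 'k::field)"
proof -
  assume "vfin h"
  hence "fa_mult (ev u) h = fa_mult (ev u) (lin ev h)" by (simp add: lin_ev_id)
  thus ?thesis by (simp add: fa_mult_lin_right fa_mult_ev)
qed

lemma fa_mult_decomp:
  assumes "vfin f" "vfin (g :: gen list \<Rightarrow> 'k::field)"
  shows "fa_mult f g = lin (\<lambda>u. lin (\<lambda>x. ev (u @ x)) g) f"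
proof -
  have "fa_mult f g = fa_mult (lin ev f) g" using assms by (simp add: lin_ev_id)
  also have "\<dots> = lin (\<lambda>u. fa_mult (ev u) g) f" by (simp only: fa_mult_lin_left)
  finally show ?thesis using assms by (simp add: fa_mult_ev_left)
qed

lemma vfin_fa_mult[simp]: "vfin f \<Longrightarrow> vfin g \<Longrightarrow> vfin (fa_mult f (g :: gen list \<Rightarrow> 'k::field))"
  by (simp add: fa_mult_decomp)

lemma fa_mult_assoc:
  assumes "vfin f" "vfin g" "vfin (h :: gen list \<Rightarrow> 'k::field)"
  shows "fa_mult (fa_mult f g) h = fa_mult f (fa_mult g h)"
proof -
  have "fa_mult (fa_mult f g) h = lin (\<lambda>u. lin (\<lambda>x. fa_mult (ev (u @ x)) h) g) f"
    using assms by (simp add: fa_mult_decomp[of f g] fa_mult_lin_left)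
  also have "\<dots> = lin (\<lambda>u. lin (\<lambda>x. lin (\<lambda>y. ev (u @ x @ y)) h) g) f"
    using assms by (simp add: fa_mult_ev_left)
  also have "\<dots> = lin (\<lambda>u. fa_mult (ev u) (lin (\<lambda>x. lin (\<lambda>y. ev (x @ y)) h) g)) f"
    by (simp add: fa_mult_lin_right fa_mult_ev)
  also have "lin (\<lambda>x. lin (\<lambda>y. ev (x @ y)) h) g = fa_mult g h"
    using assms by (simp add: fa_mult_decomp)
  also have "lin (\<lambda>u. fa_mult (ev u) (fa_mult g h)) f = fa_mult (lin ev f) (fa_mult g h)"
    by (simp only: fa_mult_lin_left)
  also have "\<dots> = fa_mult f (fa_mult g h)" using assms by (simp add: lin_ev_id)
  finally show ?thesis .
qed

lemma fa_mult_one_left: "vfin f \<Longrightarrow> fa_mult (ev []) f = (f :: gen list \<Rightarrow> 'k::field)"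
proof -
  assume "vfin f"
  hence "fa_mult (ev []) f = fa_mult (ev []) (lin ev f)" by (simp add: lin_ev_id)
  also have "\<dots> = lin ev f" by (simp add: fa_mult_lin_right fa_mult_ev)
  finally show ?thesis using \<open>vfin f\<close> by (simp add: lin_ev_id)
qed

lemma fa_mult_one_right: "vfin f \<Longrightarrow> fa_mult f (ev []) = (f :: gen list \<Rightarrow> 'k::field)"
proof -
  assume "vfin f"
  hence "fa_mult f (ev []) = fa_mult (lin ev f) (ev [])" by (simp add: lin_ev_id)
  also have "\<dots> = lin ev f" by (simp add: fa_mult_lin_left fa_mult_ev)
  finally show ?thesis using \<open>vfin f\<close> by (simp add: lin_ev_id)
qed

lemma vfin_fa_pow[simp]: "vfin f \<Longrightarrow> vfin (fa_pow (f :: gen list \<Rightarrow> 'k::field) n)"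
  by (induction n) (auto simp: fa_word_eq)

section \<open>The representation\<close>

fun Gf :: "'k::field \<Rightarrow> gen \<Rightarrow> idx \<Rightarrow> idx \<Rightarrow> 'k" where
  "Gf q GA = afun" | "Gf q GB = Bf q" | "Gf q GC = Cf q"

lemma vfin_Gf[simp]: "vfin (Gf q g m)" by (cases g) auto

fun rho :: "'k::field \<Rightarrow> gen list \<Rightarrow> (idx \<Rightarrow> 'k) \<Rightarrow> idx \<Rightarrow> 'k" where
  "rho q [] v = v"
| "rho q (g # w) v = lin (Gf q g) (rho q w v)"

lemma vfin_rho[simp]: "vfin v \<Longrightarrow> vfin (rho q w v)"
  by (induction w) auto

lemma rho_lin: "vfin v \<Longrightarrow> (\<And>m. vfin (F m)) \<Longrightarrow> rho q w (lin F v) = lin (\<lambda>m. rho q w (F m)) v"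
  by (induction w) (auto simp: lin_comp)

lemma rho_append: "rho q (u @ w) v = rho q u (rho q w v)"
  by (induction u) auto

definition psi :: "'k::field \<Rightarrow> (gen list \<Rightarrow> 'k) \<Rightarrow> (idx \<Rightarrow> 'k) \<Rightarrow> idx \<Rightarrow> 'k" where
  "psi q f v = lin (\<lambda>w. rho q w v) f"

lemma vfin_psi[simp]: "vfin f \<Longrightarrow> vfin v \<Longrightarrow> vfin (psi q f v)" by (simp add: psi_def)
lemma psi_ev[simp]: "psi q (ev w) v = rho q w v" by (simp add: psi_def)
lemma psi_add: "vfin f \<Longrightarrow> vfin g \<Longrightarrow> psi q (f + g) v = psi q f v + psi q g v"
  by (simp add: psi_def lin_add)
lemma psi_diff: "vfin f \<Longrightarrow> vfin g \<Longrightarrow> psi q (f - g) v = psi q f v - psi q g v"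
  by (simp add: psi_def lin_diff)
lemma psi_smult: "psi q (smult c f) v = smult c (psi q f v)"
  by (simp add: psi_def lin_smult)
lemma psi_zero[simp]: "psi q 0 v = 0" by (simp add: psi_def)
lemma psi_lin: "vfin f \<Longrightarrow> vfin v \<Longrightarrow> (\<And>m. vfin (F m)) \<Longrightarrow> psi q (lin F f) v = lin (\<lambda>m. psi q (F m) v) f"
  by (simp add: psi_def lin_comp)

lemma psi_mult:
  assumes "vfin f" "vfin g" "vfin v"
  shows "psi q (fa_mult f g) v = psi q f (psi q g v)"
proof -
  have "psi q (fa_mult f g) v = lin (\<lambda>u. lin (\<lambda>x. rho q (u @ x) v) g) f"
    using assms by (simp add: fa_mult_decomp psi_lin)
  also have "\<dots> = lin (\<lambda>u. rho q u (lin (\<lambda>x. rho q x v) g)) f"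
    using assms by (simp add: rho_lin rho_append)
  finally show ?thesis by (simp add: psi_def)
qed

lemma psi_pow: "vfin f \<Longrightarrow> vfin v \<Longrightarrow> psi q (fa_pow f n) v = (psi q f ^^ n) v"
  by (induction n) (auto simp: psi_mult fa_word_eq)


lemma lin_as_sum: "lin F v = (\<Sum>m\<in>supp v. smult (v m) (F m))"
  by (simp add: lin_def fun_eq_iff sum_fun_apply)

lemma span_zero: "0 \<in> fa_span S"
  unfolding fa_span_def by (rule CollectI, rule exI[of _ "{}"]) simp

lemma span_intro: "finite T \<Longrightarrow> T \<subseteq> S \<Longrightarrow> x = (\<Sum>t\<in>T. smult (c t) t) \<Longrightarrow> x \<in> fa_span S"
  unfolding fa_span_def fa_smult_eq mem_Collect_eq
  apply (rule exI[where x=T])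
  apply (rule exI[where x=c])
  by simp

lemma span_elem: "s \<in> S \<Longrightarrow> s \<in> fa_span S"
  by (rule span_intro[where T="{s}" and c="\<lambda>_. 1"]) (auto simp: fun_eq_iff)

lemma span_smult: "x \<in> fa_span S \<Longrightarrow> smult a x \<in> fa_span (S :: (gen list \<Rightarrow> 'k::field) set)"
proof -
  assume "x \<in> fa_span S"
  then obtain T c where T: "finite T" "T \<subseteq> S" "x = (\<Sum>t\<in>T. smult (c t) t)"
    unfolding fa_span_def fa_smult_eq by blast
  have "smult a x = (\<Sum>t\<in>T. smult (a * c t) t)"
    unfolding T(3) by (simp add: fun_eq_iff sum_fun_apply sum_distrib_left mult.assoc)
  thus ?thesis using T by (intro span_intro[where T=T and c="\<lambda>t. a * c t"])
qed

lemma span_add: "x \<in> fa_span S \<Longrightarrow> y \<in> fa_span S \<Longrightarrow> x + y \<in> fa_span (S :: (gen list \<Rightarrow> 'k::field) set)"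
proof -
  assume "x \<in> fa_span S" "y \<in> fa_span S"
  then obtain T1 c1 T2 c2 where T: "finite T1" "T1 \<subseteq> S" "x = (\<Sum>t\<in>T1. smult (c1 t) t)"
    "finite T2" "T2 \<subseteq> S" "y = (\<Sum>t\<in>T2. smult (c2 t) t)"
    unfolding fa_span_def fa_smult_eq by blast
  define d1 where "d1 t = (if t \<in> T1 then c1 t else 0)" for t
  define d2 where "d2 t = (if t \<in> T2 then c2 t else 0)" for t
  have x: "x = (\<Sum>t\<in>T1 \<union> T2. smult (d1 t) t)"
    unfolding T(3) using T by (intro sum.mono_neutral_cong_left) (auto simp: d1_def fun_eq_iff)
  have y: "y = (\<Sum>t\<in>T1 \<union> T2. smult (d2 t) t)"
    unfolding T(6) using T by (intro sum.mono_neutral_cong_left) (auto simp: d2_def fun_eq_iff)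
  have "x + y = (\<Sum>t\<in>T1 \<union> T2. smult (d1 t + d2 t) t)"
    unfolding x y by (simp add: sum.distrib[symmetric] fun_eq_iff sum_fun_apply distrib_right)
  thus ?thesis using T by (intro span_intro[where T="T1 \<union> T2" and c="\<lambda>t. d1 t + d2 t"]) auto
qed

lemma span_diff: "x \<in> fa_span S \<Longrightarrow> y \<in> fa_span S \<Longrightarrow> x - y \<in> fa_span (S :: (gen list \<Rightarrow> 'k::field) set)"
proof -
  assume a: "x \<in> fa_span S" "y \<in> fa_span S"
  have e: "x - y = x + smult (-1) y" by (simp add: fun_eq_iff)
  show ?thesis unfolding e using a by (intro span_add span_smult)
qed

lemma span_sum: "(\<And>t. t \<in> T \<Longrightarrow> g t \<in> fa_span S) \<Longrightarrow> (\<Sum>t\<in>T. g t) \<in> fa_span (S :: (gen list \<Rightarrow> 'k::field) set)"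
  by (induction T rule: infinite_finite_induct) (auto simp: span_zero span_add)

lemma span_lin: "(\<And>m. m \<in> supp v \<Longrightarrow> D m \<in> fa_span S) \<Longrightarrow> lin D v \<in> fa_span (S :: (gen list \<Rightarrow> 'k::field) set)"
  unfolding lin_as_sum by (intro span_sum span_smult) auto

lemma span_vfin: "(\<And>s. s \<in> S \<Longrightarrow> vfin s) \<Longrightarrow> x \<in> fa_span S \<Longrightarrow> vfin (x :: gen list \<Rightarrow> 'k::field)"
proof -
  assume S: "\<And>s. s \<in> S \<Longrightarrow> vfin s" and "x \<in> fa_span S"
  then obtain T c where T: "finite T" "T \<subseteq> S" "x = (\<Sum>t\<in>T. smult (c t) t)"
    unfolding fa_span_def fa_smult_eq by blast
  have "vfin (\<Sum>t\<in>T. smult (c t) t)"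
  proof (rule vfin_sum)
    fix t assume "t \<in> T" thus "vfin (smult (c t) t)" using T(2) S by (intro vfin_smult) auto
  qed
  thus ?thesis using T(3) by simp
qed

lemma aw_A_eq: "aw_A = ev [GA]" by (simp add: aw_A_def fa_word_eq)
lemma aw_B_eq: "aw_B = ev [GB]" by (simp add: aw_B_def fa_word_eq)
lemma aw_C_eq: "aw_C = ev [GC]" by (simp add: aw_C_def fa_word_eq)

lemma vfin_gens[simp]: "vfin (aw_A :: gen list \<Rightarrow> 'k::field)" "vfin (aw_B :: gen list \<Rightarrow> 'k::field)"
  "vfin (aw_C :: gen list \<Rightarrow> 'k::field)"
  by (simp_all add: aw_A_eq aw_B_eq aw_C_eq)

lemma vfin_cent[simp]: "vfin X \<Longrightarrow> vfin Y \<Longrightarrow> vfin Z \<Longrightarrow> vfin (aw_cent q X Y (Z :: gen list \<Rightarrow> 'k::field))"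
  by (simp add: aw_cent_def fa_smult_eq)

lemma vfin_g[simp]: "vfin (aw_gA q)" "vfin (aw_gB q)" "vfin (aw_gC q)"
  by (simp_all add: aw_gA_def aw_gB_def aw_gC_def)

lemma vfin_greek[simp]: "vfin (aw_alpha q)" "vfin (aw_beta q)" "vfin (aw_gamma q)"
  by (simp_all add: aw_alpha_def aw_beta_def aw_gamma_def fa_smult_eq)

lemma vfin_mon[simp]: "vfin (aw_mon q m)"
  by (cases m) simp

lemma vfin_rels: "s \<in> aw_rels q \<Longrightarrow> vfin s"
  unfolding aw_rels_def by auto

definition Gset :: "'k::field \<Rightarrow> (gen list \<Rightarrow> 'k) set" where
  "Gset q = {fa_mult (fa_mult (fa_word u) s) (fa_word v) | u s v. s \<in> aw_rels q}"

lemma ideal_eq: "aw_ideal q = fa_span (Gset q)"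
  by (simp add: aw_ideal_def fa_ideal_def Gset_def)

lemma vfin_Gset: "x \<in> Gset q \<Longrightarrow> vfin x"
proof -
  assume "x \<in> Gset q"
  then obtain u s v where x: "x = fa_mult (fa_mult (ev u) s) (ev v)" "s \<in> aw_rels q"
    unfolding Gset_def fa_word_eq by blast
  have "vfin s" using x(2) by (rule vfin_rels)
  thus ?thesis using x(1) by simp
qed

lemma vfin_ideal: "x \<in> aw_ideal q \<Longrightarrow> vfin x"
  unfolding ideal_eq by (rule span_vfin[OF vfin_Gset])

lemma rels_in_ideal: "s \<in> aw_rels q \<Longrightarrow> s \<in> aw_ideal q"
proof -
  assume s: "s \<in> aw_rels q"
  have "fa_mult (fa_mult (ev []) s) (ev []) = s" using vfin_rels[OF s]
    by (simp add: fa_mult_one_left fa_mult_one_right)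
  hence "s \<in> Gset q" unfolding Gset_def fa_word_eq mem_Collect_eq
    by (intro exI[where x="[]"] exI[where x=s] conjI) (use s in auto)
  thus ?thesis unfolding ideal_eq by (rule span_elem)
qed

lemma Gset_lmult: "x \<in> Gset q \<Longrightarrow> fa_mult (ev a) x \<in> Gset q"
proof -
  assume "x \<in> Gset q"
  then obtain u s v where x: "x = fa_mult (fa_mult (ev u) s) (ev v)" "s \<in> aw_rels q"
    unfolding Gset_def fa_word_eq by blast
  have "fa_mult (ev a) x = fa_mult (fa_mult (ev (a @ u)) s) (ev v)"
    unfolding x(1) using vfin_rels[OF x(2)]
    by (simp add: fa_mult_assoc[symmetric] fa_mult_ev)
  thus ?thesis using x(2) unfolding Gset_def fa_word_eq by blast
qed

lemma Gset_rmult: "x \<in> Gset q \<Longrightarrow> fa_mult x (ev a) \<in> Gset q"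
proof -
  assume "x \<in> Gset q"
  then obtain u s v where x: "x = fa_mult (fa_mult (ev u) s) (ev v)" "s \<in> aw_rels q"
    unfolding Gset_def fa_word_eq by blast
  have "fa_mult x (ev a) = fa_mult (fa_mult (ev u) s) (ev (v @ a))"
    unfolding x(1) using vfin_rels[OF x(2)]
    by (simp add: fa_mult_assoc fa_mult_ev)
  thus ?thesis using x(2) unfolding Gset_def fa_word_eq by blast
qed

lemma ideal_lmult_ev: "x \<in> aw_ideal q \<Longrightarrow> fa_mult (ev a) x \<in> aw_ideal q"
proof -
  assume "x \<in> aw_ideal q"
  then obtain T c where T: "finite T" "T \<subseteq> Gset q" "x = (\<Sum>t\<in>T. smult (c t) t)"
    unfolding ideal_eq fa_span_def fa_smult_eq by blast
  have "fa_mult (ev a) x = (\<Sum>t\<in>T. smult (c t) (fa_mult (ev a) t))"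
    unfolding T(3) by (simp add: fa_mult_sum_right fa_mult_smult_right)
  also have "\<dots> \<in> aw_ideal q" unfolding ideal_eq
    using T by (intro span_sum span_smult span_elem Gset_lmult) auto
  finally show ?thesis .
qed

lemma ideal_rmult_ev: "x \<in> aw_ideal q \<Longrightarrow> fa_mult x (ev a) \<in> aw_ideal q"
proof -
  assume "x \<in> aw_ideal q"
  then obtain T c where T: "finite T" "T \<subseteq> Gset q" "x = (\<Sum>t\<in>T. smult (c t) t)"
    unfolding ideal_eq fa_span_def fa_smult_eq by blast
  have "fa_mult x (ev a) = (\<Sum>t\<in>T. smult (c t) (fa_mult t (ev a)))"
    unfolding T(3) by (simp add: fa_mult_sum_left fa_mult_smult_left)
  also have "\<dots> \<in> aw_ideal q" unfolding ideal_eq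
    using T by (intro span_sum span_smult span_elem Gset_rmult) auto
  finally show ?thesis .
qed

lemma ideal_add: "x \<in> aw_ideal q \<Longrightarrow> y \<in> aw_ideal q \<Longrightarrow> x + y \<in> aw_ideal q"
  unfolding ideal_eq by (rule span_add)
lemma ideal_diff: "x \<in> aw_ideal q \<Longrightarrow> y \<in> aw_ideal q \<Longrightarrow> x - y \<in> aw_ideal q"
  unfolding ideal_eq by (rule span_diff)
lemma ideal_smult: "x \<in> aw_ideal q \<Longrightarrow> smult a x \<in> aw_ideal q"
  unfolding ideal_eq by (rule span_smult)
lemma ideal_zero: "0 \<in> aw_ideal q"
  unfolding ideal_eq by (rule span_zero)
lemma ideal_zero': "(\<lambda>_. 0) \<in> aw_ideal q"
  using ideal_zero by (simp add: zero_fun_def)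
lemma ideal_lin: "(\<And>m. m \<in> supp v \<Longrightarrow> D m \<in> aw_ideal q) \<Longrightarrow> lin D v \<in> aw_ideal q"
  unfolding ideal_eq by (rule span_lin)

lemma ideal_lmult: "vfin f \<Longrightarrow> x \<in> aw_ideal q \<Longrightarrow> fa_mult f x \<in> aw_ideal q"
proof -
  assume f: "vfin f" and x: "x \<in> aw_ideal q"
  have "fa_mult f x = fa_mult (lin ev f) x" using f by (simp add: lin_ev_id)
  also have "\<dots> = lin (\<lambda>u. fa_mult (ev u) x) f" by (simp only: fa_mult_lin_left)
  also have "\<dots> \<in> aw_ideal q" using x by (intro ideal_lin ideal_lmult_ev)
  finally show ?thesis .
qed

lemma ideal_rmult: "vfin f \<Longrightarrow> x \<in> aw_ideal q \<Longrightarrow> fa_mult x f \<in> aw_ideal q"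
proof -
  assume f: "vfin f" and x: "x \<in> aw_ideal q"
  have "fa_mult x f = fa_mult x (lin ev f)" using f by (simp add: lin_ev_id)
  also have "\<dots> = lin (\<lambda>u. fa_mult x (ev u)) f" by (simp only: fa_mult_lin_right)
  also have "\<dots> \<in> aw_ideal q" using x by (intro ideal_lin ideal_rmult_ev)
  finally show ?thesis .
qed

definition central :: "'k::field \<Rightarrow> (gen list \<Rightarrow> 'k) \<Rightarrow> bool" where
  "central q g \<longleftrightarrow> vfin g \<and> (\<forall>f. vfin f \<longrightarrow> fa_mult g f - fa_mult f g \<in> aw_ideal q)"

lemma central_gen:
  assumes g: "g \<in> {aw_gA q, aw_gB q, aw_gC q}" and a: "a \<in> {GA, GB, GC}"
  shows "fa_mult g (ev [a]) - fa_mult (ev [a]) g \<in> aw_ideal q"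
proof -
  have "ev [a] \<in> {aw_A, aw_B, aw_C}" using a by (auto simp: aw_A_eq aw_B_eq aw_C_eq)
  hence "fa_mult (ev [a]) g - fa_mult g (ev [a]) \<in> aw_rels q" using g unfolding aw_rels_def by blast
  hence "fa_mult (ev [a]) g - fa_mult g (ev [a]) \<in> aw_ideal q" by (rule rels_in_ideal)
  hence "smult (-1) (fa_mult (ev [a]) g - fa_mult g (ev [a])) \<in> aw_ideal q" by (rule ideal_smult)
  moreover have "smult (-1) (fa_mult (ev [a]) g - fa_mult g (ev [a])) = fa_mult g (ev [a]) - fa_mult (ev [a]) g"
    by (simp add: fun_eq_iff)
  ultimately show ?thesis by simp
qed

lemma central_g: assumes g: "g \<in> {aw_gA q, aw_gB q, aw_gC q}" shows "central q g"
proof -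
  have vg: "vfin g" using g by auto
  have w: "fa_mult g (ev w) - fa_mult (ev w) g \<in> aw_ideal q" for w
  proof (induction w)
    case Nil thus ?case using vg by (simp add: fa_mult_one_left fa_mult_one_right ideal_zero ideal_zero')
  next
    case (Cons a w)
    have a: "a \<in> {GA, GB, GC}" by (cases a) auto
    have e: "ev (a # w) = fa_mult (ev [a]) (ev w)" by (simp add: fa_mult_ev)
    have "fa_mult g (ev (a # w)) - fa_mult (ev (a # w)) g
        = fa_mult (fa_mult g (ev [a]) - fa_mult (ev [a]) g) (ev w)
          + fa_mult (ev [a]) (fa_mult g (ev w) - fa_mult (ev w) g)"
      unfolding e using vg
      by (simp add: fa_mult_diff_left fa_mult_diff_right fa_mult_assoc fun_eq_iff)
    also have "\<dots> \<in> aw_ideal q"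
    proof (rule ideal_add)
      show "fa_mult (fa_mult g (ev [a]) - fa_mult (ev [a]) g) (ev w) \<in> aw_ideal q"
        by (rule ideal_rmult[OF vfin_ev central_gen[OF g a]])
      show "fa_mult (ev [a]) (fa_mult g (ev w) - fa_mult (ev w) g) \<in> aw_ideal q"
        by (rule ideal_lmult[OF vfin_ev Cons.IH])
    qed
    finally show ?case .
  qed
  have "fa_mult g f - fa_mult f g \<in> aw_ideal q" if f: "vfin f" for f
  proof -
    have "fa_mult g f - fa_mult f g = fa_mult g (lin ev f) - fa_mult (lin ev f) g"
      using f by (simp add: lin_ev_id)
    also have "\<dots> = lin (\<lambda>u. fa_mult g (ev u) - fa_mult (ev u) g) f"
      by (simp add: fa_mult_lin_left fa_mult_lin_right lin_fdiff)
    also have "\<dots> \<in> aw_ideal q" using w by (intro ideal_lin)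
    finally show ?thesis .
  qed
  thus ?thesis using vg unfolding central_def by blast
qed

lemma central_pass:
  assumes "central q g" "vfin X" "vfin Y"
  shows "fa_mult g (fa_mult X Y) - fa_mult X (fa_mult g Y) \<in> aw_ideal q"
proof -
  have "fa_mult g (fa_mult X Y) - fa_mult X (fa_mult g Y) = fa_mult (fa_mult g X - fa_mult X g) Y"
    using assms by (simp add: fa_mult_diff_left fa_mult_assoc central_def)
  also have "\<dots> \<in> aw_ideal q" using assms unfolding central_def by (intro ideal_rmult) auto
  finally show ?thesis .
qed


lemma qfacts:
  fixes q :: "'k::field"
  assumes q: "q \<noteq> 0" and q4: "q ^ 4 \<noteq> 1"
  shows "eps q \<noteq> 0" "q + inverse q \<noteq> 0" "kinv q * (q + inverse q) = 1"
proof -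
  show e: "eps q \<noteq> 0"
  proof
    assume "eps q = 0"
    hence "q^2 * q^2 = q^2 * (inverse q)^2" by (simp add: eps_def)
    hence "q^4 = 1" using q by (simp add: power2_eq_square field_simps power4_eq_xxxx)
    thus False using q4 by simp
  qed
  show k: "q + inverse q \<noteq> 0"
  proof
    assume "q + inverse q = 0"
    hence "q * (q + inverse q) = 0" by simp
    moreover have "q * (q + inverse q) = q * q + 1" using q by (simp add: distrib_left)
    ultimately have "q * q + 1 = 0" by simp
    hence "q^2 = -1" by (simp add: power2_eq_square eq_neg_iff_add_eq_0)
    hence "q^4 = 1" by (simp add: power4_eq_xxxx power2_eq_square[symmetric])
    thus False using q4 by simp
  qed
  show "kinv q * (q + inverse q) = 1" using k by (simp add: kinv_def)
qed

lemma eps_eq: "q^2 - (inverse q)^2 = eps q" by (simp add: eps_def)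

lemma psi_A: "psi q aw_A v = opA v" by (simp add: aw_A_eq opA_def)
lemma psi_B: "psi q aw_B v = opB q v" by (simp add: aw_B_eq opB_def)
lemma psi_C: "psi q aw_C v = opC q v" by (simp add: aw_C_eq opC_def)

lemma psi_cent:
  assumes "vfin X" "vfin Y" "vfin Z" "vfin v"
  shows "psi q (aw_cent q X Y Z) v = psi q X v + smult (inverse (eps q))
     (smult q (psi q Y (psi q Z v)) - smult (inverse q) (psi q Z (psi q Y v)))"
  unfolding aw_cent_def fa_smult_eq eps_eq using assms
  by (simp add: psi_add psi_diff psi_smult psi_mult)

lemma psi_gA:
  assumes q: "q \<noteq> 0" "q ^ 4 \<noteq> 1" and v: "vfin v"
  shows "psi q (aw_gA q) v = smult (kinv q) (trV (1,0,0) v)"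
proof -
  have e: "eps q \<noteq> 0" using qfacts[OF q] by simp
  have "E1 q v" by (rule E1_all[OF q(1) v])
  hence e1: "opC q (opB q v) = smult (q^2) (opB q (opC q v)) + smult (q * eps q) (opA v)
     - smult (q * eps q * kinv q) (trV (1,0,0) v)" by (simp add: E1_def)
  show ?thesis unfolding aw_gA_def using v
    apply (simp add: psi_cent psi_A psi_B psi_C e1)
    using e q by (simp add: fun_eq_iff field_simps power2_eq_square)
qed

lemma psi_gB:
  assumes q: "q \<noteq> 0" "q ^ 4 \<noteq> 1" and v: "vfin v"
  shows "psi q (aw_gB q) v = smult (kinv q) (trV (0,1,0) v)"
proof -
  have e: "eps q \<noteq> 0" using qfacts[OF q] by simp
  show ?thesis unfolding aw_gB_def using v
    apply (simp add: psi_cent psi_A psi_B psi_C E2)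
    using e q by (simp add: fun_eq_iff field_simps power2_eq_square)
qed

lemma psi_gC:
  assumes q: "q \<noteq> 0" "q ^ 4 \<noteq> 1" and v: "vfin v"
  shows "psi q (aw_gC q) v = smult (kinv q) (trV (0,0,1) v)"
proof -
  have e: "eps q \<noteq> 0" using qfacts[OF q] by simp
  show ?thesis unfolding aw_gC_def using v
    apply (simp add: psi_cent psi_A psi_B psi_C E3)
    using e q by (simp add: fun_eq_iff field_simps power2_eq_square)
qed

lemma rho_zero[simp]: "rho q u 0 = 0"
proof (induction u)
  case (Cons a u)
  have "rho q (a # u) 0 = lin (Gf q a) (rho q u 0)" by simp
  also have "\<dots> = 0" unfolding Cons.IH by (rule lin_zero)
  finally show ?case .
qed simp

lemma psi_sum: "(\<And>t. t \<in> T \<Longrightarrow> vfin (g t)) \<Longrightarrow> psi q (\<Sum>t\<in>T. g t) v = (\<Sum>t\<in>T. psi q (g t) v)"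
  unfolding psi_def by (rule lin_sum)

lemma psi_rel:
  assumes q: "q \<noteq> 0" "q ^ 4 \<noteq> 1" and s: "s \<in> aw_rels q" and v: "vfin v"
  shows "psi q s v = 0"
proof -
  obtain X g where s: "s = fa_mult X g - fa_mult g X" and X: "X \<in> {aw_A, aw_B, aw_C}"
    and g: "g \<in> {aw_gA q, aw_gB q, aw_gC q}" using s unfolding aw_rels_def by blast
  have vX: "vfin X" and vg: "vfin g" using X g by auto
  have "psi q X (psi q g v) = psi q g (psi q X v)"
    using X g v
    by (auto simp: psi_A psi_B psi_C psi_gA[OF q] psi_gB[OF q] psi_gC[OF q]
                   opA_smult opB_smult opC_smult opA_tr opB_tr opC_tr)
  thus ?thesis unfolding s using vX vg v by (simp add: psi_diff psi_mult)
qed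

lemma psi_ideal:
  assumes q: "q \<noteq> 0" "q ^ 4 \<noteq> 1" and x: "x \<in> aw_ideal q" and v: "vfin v"
  shows "psi q x v = 0"
proof -
  obtain T c where T: "finite T" "T \<subseteq> Gset q" "x = (\<Sum>t\<in>T. smult (c t) t)"
    using x unfolding ideal_eq fa_span_def fa_smult_eq by blast
  have "psi q t v = 0" if t: "t \<in> Gset q" for t
  proof -
    obtain u s w where t: "t = fa_mult (fa_mult (ev u) s) (ev w)" and s: "s \<in> aw_rels q"
      using t unfolding Gset_def fa_word_eq by blast
    have vs: "vfin s" using s by (rule vfin_rels)
    show ?thesis unfolding t using vs v by (simp add: psi_mult psi_rel[OF q s])
  qed
  hence z: "\<And>t. t \<in> T \<Longrightarrow> psi q t v = 0" using T(2) by blast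
  have vf: "\<And>t. t \<in> T \<Longrightarrow> vfin (smult (c t) t)" using T(2) by (auto intro!: vfin_smult intro: vfin_Gset)
  have "psi q x v = (\<Sum>t\<in>T. smult (c t) (psi q t v))" unfolding T(3) using vf by (simp add: psi_sum psi_smult)
  also have "\<dots> = (\<Sum>t\<in>T. 0)" by (rule sum.cong) (auto simp: z fun_eq_iff)
  finally show ?thesis by simp
qed

lemma psi_alpha: "q \<noteq> 0 \<Longrightarrow> q ^ 4 \<noteq> 1 \<Longrightarrow> vfin v \<Longrightarrow> psi q (aw_alpha q) v = trV (1,0,0) v"
  unfolding aw_alpha_def fa_smult_eq
  by (simp add: psi_smult psi_gA fun_eq_iff mult.assoc[symmetric] qfacts mult.commute[of "q + inverse q"])
lemma psi_beta: "q \<noteq> 0 \<Longrightarrow> q ^ 4 \<noteq> 1 \<Longrightarrow> vfin v \<Longrightarrow> psi q (aw_beta q) v = trV (0,1,0) v"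
  unfolding aw_beta_def fa_smult_eq
  by (simp add: psi_smult psi_gB fun_eq_iff mult.assoc[symmetric] qfacts mult.commute[of "q + inverse q"])
lemma psi_gamma: "q \<noteq> 0 \<Longrightarrow> q ^ 4 \<noteq> 1 \<Longrightarrow> vfin v \<Longrightarrow> psi q (aw_gamma q) v = trV (0,0,1) v"
  unfolding aw_gamma_def fa_smult_eq
  by (simp add: psi_smult psi_gC fun_eq_iff mult.assoc[symmetric] qfacts mult.commute[of "q + inverse q"])

lemma pow_gamma: "q \<noteq> 0 \<Longrightarrow> q ^ 4 \<noteq> 1 \<Longrightarrow>
  psi q (fa_pow (aw_gamma q) n) (ev (i,j,k,r,s,t)) = ev (i,j,k,r,s,t+n)"
  by (induction n) (auto simp: fa_word_eq psi_mult psi_gamma)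
lemma pow_beta: "q \<noteq> 0 \<Longrightarrow> q ^ 4 \<noteq> 1 \<Longrightarrow>
  psi q (fa_pow (aw_beta q) n) (ev (i,j,k,r,s,t)) = ev (i,j,k,r,s+n,t)"
  by (induction n) (auto simp: fa_word_eq psi_mult psi_beta)
lemma pow_alpha: "q \<noteq> 0 \<Longrightarrow> q ^ 4 \<noteq> 1 \<Longrightarrow>
  psi q (fa_pow (aw_alpha q) n) (ev (i,j,k,r,s,t)) = ev (i,j,k,r+n,s,t)"
  by (induction n) (auto simp: fa_word_eq psi_mult psi_alpha)
lemma pow_C: "psi q (fa_pow aw_C n) (ev (0,0,k,r,s,t)) = ev (0,0,k+n,r,s,t)"
  by (induction n) (auto simp: fa_word_eq psi_mult psi_C opC_def EqC0)
lemma pow_B: "psi q (fa_pow aw_B n) (ev (0,j,k,r,s,t)) = ev (0,j+n,k,r,s,t)"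
  by (induction n) (auto simp: fa_word_eq psi_mult psi_B opB_def EqB0)
lemma pow_A: "psi q (fa_pow aw_A n) (ev (i,j,k,r,s,t)) = ev (i+n,j,k,r,s,t)"
  by (induction n) (auto simp: fa_word_eq psi_mult psi_A opA_def)

lemma psi_mon:
  assumes "q \<noteq> 0" "q ^ 4 \<noteq> 1"
  shows "psi q (aw_mon q m) (ev (0,0,0,0,0,0)) = ev m"
proof -
  obtain i j k r s t where m: "m = (i,j,k,r,s,t)" by (cases m) auto
  show ?thesis unfolding m using assms
    by (simp add: psi_mult pow_A pow_B pow_C pow_alpha pow_beta pow_gamma)
qed

lemma indep:
  assumes q: "q \<noteq> 0" "q ^ 4 \<noteq> 1" and M: "finite M"
    and I: "(\<Sum>m\<in>M. fa_smult (c m) (aw_mon q m)) \<in> aw_ideal q" and m0: "m0 \<in> M"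
  shows "c m0 = 0"
proof -
  let ?e = "ev (0,0,0,0,0,0) :: idx \<Rightarrow> 'a"
  have "psi q (\<Sum>m\<in>M. fa_smult (c m) (aw_mon q m)) ?e = 0"
    by (rule psi_ideal[OF q I]) simp
  moreover have "psi q (\<Sum>m\<in>M. fa_smult (c m) (aw_mon q m)) ?e = (\<Sum>m\<in>M. smult (c m) (ev m))"
    unfolding fa_smult_eq by (simp add: psi_sum psi_smult psi_mon[OF q])
  ultimately have "(\<Sum>m\<in>M. smult (c m) (ev m)) m0 = 0" by simp
  moreover have "(\<Sum>m\<in>M. smult (c m) (ev m)) m0 = (\<Sum>m\<in>M. if m0 = m then c m else 0)"
    by (simp add: sum_fun_apply ev_apply) (intro sum.cong, auto)
  ultimately show ?thesis using M m0 by (simp add: sum.delta)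
qed


lemma vfin_fa_word[simp]: "vfin (fa_word w :: gen list \<Rightarrow> 'k::field)" by (simp add: fa_word_eq)

lemma fa_pow_Suc': "fa_pow f (Suc n) = fa_mult f (fa_pow f n)" by simp

lemma mon_Suc_A: "aw_mon q (Suc i,j,k,r,s,t) = fa_mult aw_A (aw_mon q (i,j,k,r,s,t))"
  by (simp add: fa_mult_assoc del: fa_pow.simps add: fa_pow_Suc')

lemma mon_0: "aw_mon q (0,j,k,r,s,t) = fa_mult (fa_pow aw_B j) (fa_mult (fa_pow aw_C k)
       (fa_mult (fa_pow (aw_alpha q) r) (fa_mult (fa_pow (aw_beta q) s) (fa_pow (aw_gamma q) t))))"
  by (simp add: fa_word_eq fa_mult_one_left)

lemma mon_Suc_B: "aw_mon q (0,Suc j,k,r,s,t) = fa_mult aw_B (aw_mon q (0,j,k,r,s,t))"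
  unfolding mon_0 by (simp add: fa_mult_assoc del: fa_pow.simps add: fa_pow_Suc')

lemma mon_00: "aw_mon q (0,0,k,r,s,t) = fa_mult (fa_pow aw_C k)
       (fa_mult (fa_pow (aw_alpha q) r) (fa_mult (fa_pow (aw_beta q) s) (fa_pow (aw_gamma q) t)))"
  unfolding mon_0 by (simp add: fa_word_eq fa_mult_one_left)

lemma mon_Suc_C: "aw_mon q (0,0,Suc k,r,s,t) = fa_mult aw_C (aw_mon q (0,0,k,r,s,t))"
  unfolding mon_00 by (simp add: fa_mult_assoc del: fa_pow.simps add: fa_pow_Suc')

lemma mon_zero: "aw_mon q (0,0,0,0,0,0) = ev []"
  by (simp add: fa_word_eq fa_mult_one_left)

lemma QA: "vfin v \<Longrightarrow> fa_mult aw_A (lin (aw_mon q) v) = lin (aw_mon q) (opA v)"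
proof -
  assume v: "vfin v"
  have "fa_mult aw_A (lin (aw_mon q) v) = lin (\<lambda>m. fa_mult aw_A (aw_mon q m)) v"
    by (simp only: fa_mult_lin_right)
  also have "\<dots> = lin (\<lambda>m. lin (aw_mon q) (afun m)) v"
  proof (rule lin_cong)
    fix m :: idx
    obtain i j k r s t where m: "m = (i,j,k,r,s,t)" by (cases m) auto
    show "fa_mult aw_A (aw_mon q m) = lin (aw_mon q) (afun m)"
      by (simp only: m afun.simps lin_ev mon_Suc_A)
  qed
  also have "\<dots> = lin (aw_mon q) (opA v)" unfolding opA_def using v by (simp add: lin_comp)
  finally show ?thesis .
qed

section \<open>Exact commutation identities in the free algebra\<close>

lemma rel_BA:
  assumes q: "q \<noteq> 0" "q ^ 4 \<noteq> 1"
  shows "fa_mult aw_B aw_A = smult (q^2) (fa_mult aw_A aw_B) + smult (q * eps q) aw_C - smult (q * eps q) (aw_gC q)"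
proof -
  have e: "eps q \<noteq> 0" using qfacts[OF q] by simp
  show ?thesis unfolding aw_gC_def aw_cent_def fa_smult_eq eps_eq
    using e q by (simp add: fun_eq_iff field_simps power2_eq_square)
qed

lemma rel_CA:
  assumes q: "q \<noteq> 0" "q ^ 4 \<noteq> 1"
  shows "fa_mult aw_C aw_A = smult (inverse q ^ 2) (fa_mult aw_A aw_C) - smult (inverse q * eps q) aw_B
     + smult (inverse q * eps q) (aw_gB q)"
proof -
  have e: "eps q \<noteq> 0" using qfacts[OF q] by simp
  show ?thesis unfolding aw_gB_def aw_cent_def fa_smult_eq eps_eq
    using e q by (simp add: fun_eq_iff field_simps power2_eq_square)
qed

lemma rel_CB:
  assumes q: "q \<noteq> 0" "q ^ 4 \<noteq> 1"
  shows "fa_mult aw_C aw_B = smult (q^2) (fa_mult aw_B aw_C) + smult (q * eps q) aw_A - smult (q * eps q) (aw_gA q)"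
proof -
  have e: "eps q \<noteq> 0" using qfacts[OF q] by simp
  show ?thesis unfolding aw_gA_def aw_cent_def fa_smult_eq eps_eq
    using e q by (simp add: fun_eq_iff field_simps power2_eq_square)
qed

lemma pass_cong:
  assumes c: "central q g" and P: "vfin P" and Y: "vfin Y" and gz: "fa_mult g Y - Z \<in> aw_ideal q"
  shows "fa_mult g (fa_mult P Y) - fa_mult P Z \<in> aw_ideal q"
proof -
  have "fa_mult g (fa_mult P Y) - fa_mult P Z
      = (fa_mult g (fa_mult P Y) - fa_mult P (fa_mult g Y)) + fa_mult P (fa_mult g Y - Z)"
    by (simp add: fa_mult_diff_right fun_eq_iff)
  also have "\<dots> \<in> aw_ideal q"
    by (rule ideal_add[OF central_pass[OF c P Y] ideal_lmult[OF P gz]])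
  finally show ?thesis .
qed

lemma smult_mult_cancel: "kinv q * (q + inverse q) = 1 \<Longrightarrow>
   smult (kinv q) (fa_mult (fa_smult (q + inverse q) g) P) = fa_mult g P"
  by (simp add: fa_smult_eq fa_mult_smult_left fun_eq_iff mult.assoc[symmetric])

lemma move_gC:
  assumes q: "q \<noteq> 0" "q ^ 4 \<noteq> 1"
  shows "fa_mult (aw_gC q) (aw_mon q (i,j,k,r,s,t)) - smult (kinv q) (aw_mon q (i,j,k,r,s,Suc t)) \<in> aw_ideal q"
proof -
  let ?g = "aw_gC q"
  have c: "central q ?g" by (rule central_g) simp
  have b: "fa_mult ?g (fa_pow (aw_gamma q) t) - smult (kinv q) (fa_pow (aw_gamma q) (Suc t)) \<in> aw_ideal q"
    using smult_mult_cancel[OF qfacts(3)[OF q], of ?g "fa_pow (aw_gamma q) t"]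
    by (simp add: aw_gamma_def ideal_zero ideal_zero')
  have "fa_mult ?g (aw_mon q (i,j,k,r,s,t)) - fa_mult (fa_pow aw_A i) (fa_mult (fa_pow aw_B j) (fa_mult (fa_pow aw_C k)
       (fa_mult (fa_pow (aw_alpha q) r) (fa_mult (fa_pow (aw_beta q) s) (smult (kinv q) (fa_pow (aw_gamma q) (Suc t)))))))
     \<in> aw_ideal q"
    unfolding aw_mon.simps
    by (intro pass_cong[OF c] b) simp_all
  moreover have "fa_mult (fa_pow aw_A i) (fa_mult (fa_pow aw_B j) (fa_mult (fa_pow aw_C k)
       (fa_mult (fa_pow (aw_alpha q) r) (fa_mult (fa_pow (aw_beta q) s) (smult (kinv q) (fa_pow (aw_gamma q) (Suc t)))))))
      = smult (kinv q) (aw_mon q (i,j,k,r,s,Suc t))"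
    unfolding aw_mon.simps by (simp only: fa_mult_smult_right)
  ultimately show ?thesis by simp
qed

lemma move_gB:
  assumes q: "q \<noteq> 0" "q ^ 4 \<noteq> 1"
  shows "fa_mult (aw_gB q) (aw_mon q (i,j,k,r,s,t)) - smult (kinv q) (aw_mon q (i,j,k,r,Suc s,t)) \<in> aw_ideal q"
proof -
  let ?g = "aw_gB q"
  let ?G = "fa_pow (aw_gamma q) t"
  have c: "central q ?g" by (rule central_g) simp
  have "fa_mult ?g (fa_mult (fa_pow (aw_beta q) s) ?G) = fa_mult (fa_mult ?g (fa_pow (aw_beta q) s)) ?G"
    by (simp add: fa_mult_assoc)
  also have "fa_mult ?g (fa_pow (aw_beta q) s) = smult (kinv q) (fa_pow (aw_beta q) (Suc s))"
    using smult_mult_cancel[OF qfacts(3)[OF q], of ?g "fa_pow (aw_beta q) s"]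
    by (simp add: aw_beta_def)
  also have "fa_mult (smult (kinv q) (fa_pow (aw_beta q) (Suc s))) ?G = smult (kinv q) (fa_mult (fa_pow (aw_beta q) (Suc s)) ?G)"
    by (rule fa_mult_smult_left)
  finally have b0: "fa_mult ?g (fa_mult (fa_pow (aw_beta q) s) ?G) = smult (kinv q) (fa_mult (fa_pow (aw_beta q) (Suc s)) ?G)" .
  have b: "fa_mult ?g (fa_mult (fa_pow (aw_beta q) s) ?G) - smult (kinv q) (fa_mult (fa_pow (aw_beta q) (Suc s)) ?G) \<in> aw_ideal q"
    unfolding b0 by (simp only: diff_self ideal_zero)
  have "fa_mult ?g (aw_mon q (i,j,k,r,s,t)) - fa_mult (fa_pow aw_A i) (fa_mult (fa_pow aw_B j) (fa_mult (fa_pow aw_C k)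
       (fa_mult (fa_pow (aw_alpha q) r) (smult (kinv q) (fa_mult (fa_pow (aw_beta q) (Suc s)) ?G)))))
     \<in> aw_ideal q"
    unfolding aw_mon.simps
    by (intro pass_cong[OF c] b) simp_all
  moreover have "fa_mult (fa_pow aw_A i) (fa_mult (fa_pow aw_B j) (fa_mult (fa_pow aw_C k)
       (fa_mult (fa_pow (aw_alpha q) r) (smult (kinv q) (fa_mult (fa_pow (aw_beta q) (Suc s)) ?G)))))
      = smult (kinv q) (aw_mon q (i,j,k,r,Suc s,t))"
    unfolding aw_mon.simps by (simp only: fa_mult_smult_right)
  ultimately show ?thesis by simp
qed

lemma move_gA:
  assumes q: "q \<noteq> 0" "q ^ 4 \<noteq> 1"
  shows "fa_mult (aw_gA q) (aw_mon q (i,j,k,r,s,t)) - smult (kinv q) (aw_mon q (i,j,k,Suc r,s,t)) \<in> aw_ideal q"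
proof -
  let ?g = "aw_gA q"
  let ?G = "fa_mult (fa_pow (aw_beta q) s) (fa_pow (aw_gamma q) t)"
  have c: "central q ?g" by (rule central_g) simp
  have "fa_mult ?g (fa_mult (fa_pow (aw_alpha q) r) ?G) = fa_mult (fa_mult ?g (fa_pow (aw_alpha q) r)) ?G"
    by (simp add: fa_mult_assoc)
  also have "fa_mult ?g (fa_pow (aw_alpha q) r) = smult (kinv q) (fa_pow (aw_alpha q) (Suc r))"
    using smult_mult_cancel[OF qfacts(3)[OF q], of ?g "fa_pow (aw_alpha q) r"]
    by (simp add: aw_alpha_def)
  also have "fa_mult (smult (kinv q) (fa_pow (aw_alpha q) (Suc r))) ?G = smult (kinv q) (fa_mult (fa_pow (aw_alpha q) (Suc r)) ?G)"
    by (rule fa_mult_smult_left)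
  finally have b0: "fa_mult ?g (fa_mult (fa_pow (aw_alpha q) r) ?G) = smult (kinv q) (fa_mult (fa_pow (aw_alpha q) (Suc r)) ?G)" .
  have b: "fa_mult ?g (fa_mult (fa_pow (aw_alpha q) r) ?G) - smult (kinv q) (fa_mult (fa_pow (aw_alpha q) (Suc r)) ?G) \<in> aw_ideal q"
    unfolding b0 by (simp only: diff_self ideal_zero)
  have "fa_mult ?g (aw_mon q (i,j,k,r,s,t)) - fa_mult (fa_pow aw_A i) (fa_mult (fa_pow aw_B j) (fa_mult (fa_pow aw_C k)
       (smult (kinv q) (fa_mult (fa_pow (aw_alpha q) (Suc r)) ?G))))
     \<in> aw_ideal q"
    unfolding aw_mon.simps
    by (intro pass_cong[OF c] b) simp_all
  moreover have "fa_mult (fa_pow aw_A i) (fa_mult (fa_pow aw_B j) (fa_mult (fa_pow aw_C k)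
       (smult (kinv q) (fa_mult (fa_pow (aw_alpha q) (Suc r)) ?G))))
      = smult (kinv q) (aw_mon q (i,j,k,Suc r,s,t))"
    unfolding aw_mon.simps by (simp only: fa_mult_smult_right)
  ultimately show ?thesis by simp
qed

section \<open>Straightening\<close>

definition PB :: "'k::field \<Rightarrow> idx \<Rightarrow> bool" where
  "PB q m \<longleftrightarrow> fa_mult aw_B (aw_mon q m) - lin (aw_mon q) (Bf q m) \<in> aw_ideal q"
definition PC :: "'k::field \<Rightarrow> idx \<Rightarrow> bool" where
  "PC q m \<longleftrightarrow> fa_mult aw_C (aw_mon q m) - lin (aw_mon q) (Cf q m) \<in> aw_ideal q"

lemma lift_B:
  assumes v: "vfin v" and P: "\<And>p. p \<in> supp v \<Longrightarrow> PB q p"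
  shows "fa_mult aw_B (lin (aw_mon q) v) - lin (aw_mon q) (opB q v) \<in> aw_ideal q"
proof -
  have "fa_mult aw_B (lin (aw_mon q) v) - lin (aw_mon q) (opB q v)
      = lin (\<lambda>p. fa_mult aw_B (aw_mon q p)) v - lin (\<lambda>p. lin (aw_mon q) (Bf q p)) v"
    unfolding opB_def using v by (simp add: fa_mult_lin_right lin_comp)
  also have "\<dots> = lin (\<lambda>p. fa_mult aw_B (aw_mon q p) - lin (aw_mon q) (Bf q p)) v"
    by (simp only: lin_fdiff)
  also have "\<dots> \<in> aw_ideal q" using P by (intro ideal_lin) (simp add: PB_def)
  finally show ?thesis .
qed

lemma lift_C:
  assumes v: "vfin v" and P: "\<And>p. p \<in> supp v \<Longrightarrow> PC q p"
  shows "fa_mult aw_C (lin (aw_mon q) v) - lin (aw_mon q) (opC q v) \<in> aw_ideal q"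
proof -
  have "fa_mult aw_C (lin (aw_mon q) v) - lin (aw_mon q) (opC q v)
      = lin (\<lambda>p. fa_mult aw_C (aw_mon q p)) v - lin (\<lambda>p. lin (aw_mon q) (Cf q p)) v"
    unfolding opC_def using v by (simp add: fa_mult_lin_right lin_comp)
  also have "\<dots> = lin (\<lambda>p. fa_mult aw_C (aw_mon q p) - lin (aw_mon q) (Cf q p)) v"
    by (simp only: lin_fdiff)
  also have "\<dots> \<in> aw_ideal q" using P by (intro ideal_lin) (simp add: PC_def)
  finally show ?thesis .
qed

lemma PB_step:
  assumes q: "q \<noteq> 0" "q ^ 4 \<noteq> 1" and IB: "PB q (i,j,k,r,s,t)" and IC: "PC q (i,j,k,r,s,t)"
  shows "PB q (Suc i,j,k,r,s,t)"
proof -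
  let ?m = "(i,j,k,r,s,t)" and ?mon = "aw_mon q"
  define X where "X = fa_mult aw_B (?mon ?m)"
  define Y where "Y = lin ?mon (Bf q ?m)"
  define Z where "Z = fa_mult aw_C (?mon ?m)"
  define W where "W = lin ?mon (Cf q ?m)"
  define G where "G = fa_mult (aw_gC q) (?mon ?m)"
  define H where "H = ?mon (i,j,k,r,s,Suc t)"
  have l: "fa_mult aw_B (?mon (Suc i,j,k,r,s,t)) = smult (q^2) (fa_mult aw_A X) + smult (q * eps q) Z - smult (q * eps q) G"
  proof -
    have "fa_mult aw_B (?mon (Suc i,j,k,r,s,t)) = fa_mult (fa_mult aw_B aw_A) (?mon ?m)"
      by (simp add: mon_Suc_A fa_mult_assoc)
    also have "\<dots> = smult (q^2) (fa_mult (fa_mult aw_A aw_B) (?mon ?m)) + smult (q * eps q) Z - smult (q * eps q) G"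
      unfolding rel_BA[OF q] Z_def G_def
      by (simp add: fa_mult_add_left fa_mult_diff_left fa_mult_smult_left)
    finally show ?thesis by (simp add: X_def fa_mult_assoc)
  qed
  have r: "lin ?mon (Bf q (Suc i,j,k,r,s,t)) = smult (q^2) (fa_mult aw_A Y) + smult (q * eps q) W - smult (q * eps q * kinv q) H"
    unfolding EqB Y_def W_def H_def
    by (simp add: lin_add lin_diff lin_smult QA opA_def)
  have "fa_mult aw_B (?mon (Suc i,j,k,r,s,t)) - lin ?mon (Bf q (Suc i,j,k,r,s,t))
      = smult (q^2) (fa_mult aw_A (X - Y)) + smult (q * eps q) (Z - W) - smult (q * eps q) (G - smult (kinv q) H)"
    unfolding l r fa_mult_diff_right by (simp add: fun_eq_iff algebra_simps)
  also have "\<dots> \<in> aw_ideal q"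
  proof -
    have 1: "fa_mult aw_A (X - Y) \<in> aw_ideal q" using IB by (intro ideal_lmult) (simp_all add: PB_def X_def Y_def)
    have 2: "Z - W \<in> aw_ideal q" using IC by (simp add: PC_def Z_def W_def)
    have 3: "G - smult (kinv q) H \<in> aw_ideal q" unfolding G_def H_def by (rule move_gC[OF q])
    show ?thesis by (rule ideal_diff[OF ideal_add[OF ideal_smult[OF 1] ideal_smult[OF 2]] ideal_smult[OF 3]])
  qed
  finally show ?thesis by (simp add: PB_def)
qed

lemma PC_stepA:
  assumes q: "q \<noteq> 0" "q ^ 4 \<noteq> 1" and IB: "PB q (i,j,k,r,s,t)" and IC: "PC q (i,j,k,r,s,t)"
  shows "PC q (Suc i,j,k,r,s,t)"
proof -
  let ?m = "(i,j,k,r,s,t)" and ?mon = "aw_mon q"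
  define X where "X = fa_mult aw_B (?mon ?m)"
  define Y where "Y = lin ?mon (Bf q ?m)"
  define Z where "Z = fa_mult aw_C (?mon ?m)"
  define W where "W = lin ?mon (Cf q ?m)"
  define G where "G = fa_mult (aw_gB q) (?mon ?m)"
  define H where "H = ?mon (i,j,k,r,Suc s,t)"
  have l: "fa_mult aw_C (?mon (Suc i,j,k,r,s,t)) = smult (inverse q ^ 2) (fa_mult aw_A Z) - smult (inverse q * eps q) X
      + smult (inverse q * eps q) G"
  proof -
    have "fa_mult aw_C (?mon (Suc i,j,k,r,s,t)) = fa_mult (fa_mult aw_C aw_A) (?mon ?m)"
      by (simp add: mon_Suc_A fa_mult_assoc)
    also have "\<dots> = smult (inverse q ^ 2) (fa_mult (fa_mult aw_A aw_C) (?mon ?m)) - smult (inverse q * eps q) X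
      + smult (inverse q * eps q) G"
      unfolding rel_CA[OF q] X_def G_def
      by (simp add: fa_mult_add_left fa_mult_diff_left fa_mult_smult_left)
    finally show ?thesis by (simp add: Z_def fa_mult_assoc fun_eq_iff)
  qed
  have r: "lin ?mon (Cf q (Suc i,j,k,r,s,t)) = smult (inverse q ^ 2) (fa_mult aw_A W) - smult (inverse q * eps q) Y
      + smult (inverse q * eps q * kinv q) H"
    unfolding EqC Y_def W_def H_def
    by (simp add: lin_add lin_diff lin_smult QA opA_def)
  have "fa_mult aw_C (?mon (Suc i,j,k,r,s,t)) - lin ?mon (Cf q (Suc i,j,k,r,s,t))
      = smult (inverse q ^ 2) (fa_mult aw_A (Z - W)) - smult (inverse q * eps q) (X - Y)
        + smult (inverse q * eps q) (G - smult (kinv q) H)"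
    unfolding l r fa_mult_diff_right by (simp add: fun_eq_iff algebra_simps)
  also have "\<dots> \<in> aw_ideal q"
  proof -
    have 1: "fa_mult aw_A (Z - W) \<in> aw_ideal q" using IC by (intro ideal_lmult) (simp_all add: PC_def Z_def W_def)
    have 2: "X - Y \<in> aw_ideal q" using IB by (simp add: PB_def X_def Y_def)
    have 3: "G - smult (kinv q) H \<in> aw_ideal q" unfolding G_def H_def by (rule move_gB[OF q])
    show ?thesis by (rule ideal_add[OF ideal_diff[OF ideal_smult[OF 1] ideal_smult[OF 2]] ideal_smult[OF 3]])
  qed
  finally show ?thesis by (simp add: PC_def)
qed

lemma PC_stepB:
  assumes q: "q \<noteq> 0" "q ^ 4 \<noteq> 1" and IC: "PC q (0,j,k,r,s,t)"
    and IB: "\<And>p. p \<in> supp (Cf q (0,j,k,r,s,t)) \<Longrightarrow> PB q p"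
  shows "PC q (0,Suc j,k,r,s,t)"
proof -
  let ?m = "(0::nat,j,k,r,s,t)" and ?mon = "aw_mon q"
  define Z where "Z = fa_mult aw_C (?mon ?m)"
  define W where "W = lin ?mon (Cf q ?m)"
  define V where "V = lin ?mon (opB q (Cf q ?m))"
  define G where "G = fa_mult (aw_gA q) (?mon ?m)"
  define H where "H = ?mon (0,j,k,Suc r,s,t)"
  define K where "K = ?mon (1,j,k,r,s,t)"
  have l: "fa_mult aw_C (?mon (0,Suc j,k,r,s,t)) = smult (q^2) (fa_mult aw_B Z) + smult (q * eps q) K
      - smult (q * eps q) G"
  proof -
    have "fa_mult aw_C (?mon (0,Suc j,k,r,s,t)) = fa_mult (fa_mult aw_C aw_B) (?mon ?m)"
      unfolding mon_Suc_B by (rule fa_mult_assoc[symmetric]) (simp_all only: vfin_mon vfin_gens)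
    also have "\<dots> = smult (q^2) (fa_mult (fa_mult aw_B aw_C) (?mon ?m)) + smult (q * eps q) (fa_mult aw_A (?mon ?m))
      - smult (q * eps q) G"
      unfolding rel_CB[OF q] G_def
      by (simp add: fa_mult_add_left fa_mult_diff_left fa_mult_smult_left)
    also have "fa_mult aw_A (?mon ?m) = K" unfolding K_def One_nat_def by (rule mon_Suc_A[symmetric])
    finally show ?thesis by (simp add: Z_def fa_mult_assoc fun_eq_iff)
  qed
  have r: "lin ?mon (Cf q (0,Suc j,k,r,s,t)) = smult (q^2) V + smult (q * eps q) K
      - smult (q * eps q * kinv q) H"
    unfolding EqC1 V_def H_def K_def
    by (simp add: lin_add lin_diff lin_smult opB_def)
  have "fa_mult aw_C (?mon (0,Suc j,k,r,s,t)) - lin ?mon (Cf q (0,Suc j,k,r,s,t))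
      = smult (q^2) (fa_mult aw_B (Z - W) + (fa_mult aw_B W - V)) - smult (q * eps q) (G - smult (kinv q) H)"
    unfolding l r fa_mult_diff_right by (simp add: fun_eq_iff algebra_simps)
  also have "\<dots> \<in> aw_ideal q"
  proof -
    have 1: "fa_mult aw_B (Z - W) \<in> aw_ideal q" using IC by (intro ideal_lmult) (simp_all add: PC_def Z_def W_def)
    have 2: "fa_mult aw_B W - V \<in> aw_ideal q" unfolding W_def V_def using IB by (intro lift_B) auto
    have 3: "G - smult (kinv q) H \<in> aw_ideal q" unfolding G_def H_def by (rule move_gA[OF q])
    show ?thesis by (rule ideal_diff[OF ideal_smult[OF ideal_add[OF 1 2]] ideal_smult[OF 3]])
  qed
  finally show ?thesis by (simp add: PC_def)
qed

lemma PB_base: "PB q (0,j,k,r,s,t)"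
  unfolding PB_def EqB0 lin_ev mon_Suc_B by (simp add: ideal_zero)

lemma PC_base: "PC q (0,0,k,r,s,t)"
  unfolding PC_def EqC0 lin_ev mon_Suc_C by (simp add: ideal_zero)

lemma PBC_ind:
  assumes q: "q \<noteq> 0" "q ^ 4 \<noteq> 1"
  shows "(\<forall>m. 2 * deg m + 1 \<le> n \<longrightarrow> PB q m) \<and> (\<forall>m. 2 * deg m + 2 \<le> n \<longrightarrow> PC q m)"
proof (induction n)
  case 0 thus ?case by simp
next
  case (Suc n)
  have IHB: "\<And>m. 2 * deg m + 1 \<le> n \<Longrightarrow> PB q m" using Suc.IH by blast
  have IHC: "\<And>m. 2 * deg m + 2 \<le> n \<Longrightarrow> PC q m" using Suc.IH by blast
  have B: "PB q m" if "2 * deg m + 1 \<le> Suc n" for m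
  proof -
    obtain i j k r s t where m: "m = (i,j,k,r,s,t)" by (cases m) auto
    show ?thesis
    proof (cases i)
      case 0 thus ?thesis by (simp add: m PB_base)
    next
      case (Suc i')
      have "PB q (i',j,k,r,s,t)" using that m Suc by (intro IHB) simp
      moreover have "PC q (i',j,k,r,s,t)" using that m Suc by (intro IHC) simp
      ultimately show ?thesis unfolding m Suc by (rule PB_step[OF q])
    qed
  qed
  have C: "PC q m" if "2 * deg m + 2 \<le> Suc n" for m
  proof -
    obtain i j k r s t where m: "m = (i,j,k,r,s,t)" by (cases m) auto
    show ?thesis
    proof (cases i)
      case 0
      show ?thesis
      proof (cases j)
        case 0 thus ?thesis using \<open>i = 0\<close> by (simp add: m PC_base)
      next
        case (Suc j')
        have "PC q (0,j',k,r,s,t)" using that m Suc \<open>i = 0\<close> by (intro IHC) simp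
        moreover have "PB q p" if p: "p \<in> supp (Cf q (0,j',k,r,s,t))" for p
        proof -
          have "deg p \<le> Suc (deg (0::nat,j',k,r,s,t))" using p dbC[of q "(0,j',k,r,s,t)"] by (simp add: dbound_def)
          hence "2 * deg p + 1 \<le> n" using \<open>2 * deg m + 2 \<le> Suc n\<close> m Suc \<open>i = 0\<close> by simp
          thus ?thesis by (rule IHB)
        qed
        ultimately show ?thesis unfolding m \<open>i = 0\<close> Suc by (rule PC_stepB[OF q])
      qed
    next
      case (Suc i')
      have "PB q (i',j,k,r,s,t)" using that m Suc by (intro IHB) simp
      moreover have "PC q (i',j,k,r,s,t)" using that m Suc by (intro IHC) simp
      ultimately show ?thesis unfolding m Suc by (rule PC_stepA[OF q])
    qed
  qed
  show ?case using B C by blast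
qed

lemma PB_all: "q \<noteq> 0 \<Longrightarrow> q ^ 4 \<noteq> 1 \<Longrightarrow> PB q m"
  using PBC_ind[of q "2 * deg m + 1"] by blast
lemma PC_all: "q \<noteq> 0 \<Longrightarrow> q ^ 4 \<noteq> 1 \<Longrightarrow> PC q m"
  using PBC_ind[of q "2 * deg m + 2"] by blast

lemma span_word:
  assumes q: "q \<noteq> 0" "q ^ 4 \<noteq> 1"
  shows "ev w - lin (aw_mon q) (rho q w (ev (0,0,0,0,0,0))) \<in> aw_ideal q"
proof (induction w)
  case Nil show ?case by (simp only: rho.simps lin_ev mon_zero diff_self ideal_zero)
next
  case (Cons a w)
  let ?y = "rho q w (ev (0,0,0,0,0,0))"
  have vy: "vfin ?y" by simp
  have e: "ev (a # w) = fa_mult (ev [a]) (ev w)" by (simp add: fa_mult_ev)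
  have d: "ev (a # w) - lin (aw_mon q) (rho q (a # w) (ev (0,0,0,0,0,0)))
     = fa_mult (ev [a]) (ev w - lin (aw_mon q) ?y) + (fa_mult (ev [a]) (lin (aw_mon q) ?y) - lin (aw_mon q) (lin (Gf q a) ?y))"
    unfolding e by (simp add: fa_mult_diff_right fun_eq_iff)
  have 2: "fa_mult (ev [a]) (lin (aw_mon q) ?y) - lin (aw_mon q) (lin (Gf q a) ?y) \<in> aw_ideal q"
  proof (cases a)
    case GA thus ?thesis using vy by (simp add: aw_A_eq[symmetric] QA opA_def ideal_zero)
  next
    case GB thus ?thesis using vy PB_all[OF q] lift_B[of ?y q] by (simp add: aw_B_eq[symmetric] opB_def)
  next
    case GC thus ?thesis using vy PC_all[OF q] lift_C[of ?y q] by (simp add: aw_C_eq[symmetric] opC_def)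
  qed
  show ?case unfolding d by (rule ideal_add[OF ideal_lmult[OF vfin_ev Cons.IH] 2])
qed

lemma spanning:
  assumes q: "q \<noteq> 0" "q ^ 4 \<noteq> 1" and f: "vfin f"
  shows "f - lin (aw_mon q) (psi q f (ev (0,0,0,0,0,0))) \<in> aw_ideal q"
proof -
  let ?e = "ev (0,0,0,0,0,0)"
  have "f - lin (aw_mon q) (psi q f ?e) = lin ev f - lin (\<lambda>w. lin (aw_mon q) (rho q w ?e)) f"
    using f by (simp add: lin_ev_id psi_def lin_comp)
  also have "\<dots> = lin (\<lambda>w. ev w - lin (aw_mon q) (rho q w ?e)) f" by (simp only: lin_fdiff)
  also have "\<dots> \<in> aw_ideal q" by (intro ideal_lin span_word[OF q])
  finally show ?thesis .
qed


theorem theorem4p1: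
  fixes q :: "'k::field"
  assumes "q \<noteq> 0" and "q ^ 4 \<noteq> 1"
  shows "quotient_basis (aw_ideal q) (aw_mon q)"
  unfolding quotient_basis_def
proof (intro conjI allI ballI impI)
  fix f :: "gen list \<Rightarrow> 'k" assume "f \<in> fa_fin"
  hence f: "vfin f" by (simp add: fa_fin_eq)
  let ?v = "psi q f (ev (0,0,0,0,0,0))"
  have M: "finite (supp ?v)" using f by (simp add: vfin_def[symmetric])
  have "f - (\<Sum>m\<in>supp ?v. fa_smult (?v m) (aw_mon q m)) \<in> aw_ideal q"
    using spanning[OF assms f] by (simp add: fa_smult_eq lin_as_sum)
  thus "\<exists>M c. finite M \<and> f - (\<Sum>m\<in>M. fa_smult (c m) (aw_mon q m)) \<in> aw_ideal q"
    using M by blast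
next
  fix M and c :: "idx \<Rightarrow> 'k" and m
  assume "finite M \<and> (\<Sum>m\<in>M. fa_smult (c m) (aw_mon q m)) \<in> aw_ideal q" and "m \<in> M"
  thus "c m = 0" using indep[OF assms] by blast
qed

end
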